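(* Consider REShare with parameter $\varepsilon^*>0$ run on a request sequence in which every request has infinite duration, so that the execution is divided into consecutive intervals $h=1,2,\ldots$, interval $h$ using parameter $\varepsilon_h=\varepsilon^*/2^{h-1}$ and handling the subsequence $\sigma_h$ of requests arriving in it. Then for every $k=1,2,\ldots$, $$\sum_{h=1}^k\phi(\mathrm{REShare},\sigma_h)\le(2+4\varepsilon_k)\sum_{h=1}^k\tilde\phi(\mathrm{SHA}(\varepsilon_h),\sigma_h).$$
   Context: Network: a layered graph of finitely many nodes (datacenters), $n$ in total; a node is at layer $\ell\ge0$ if its distance from the closest leaf is $\ell$. Every node can host arbitrarily many virtual machines (VMs). Each VM $b$ runs exactly one VNF $v$ from a finite set $\mathcal V$, has maximum computing capability $\bar\mu>0$ and allocated capability $\mu_b\le\bar\mu$. VNF $v$ has complexity $\theta_v\in(0,1]$. Requests: requests $r$ arrive online with a set $\mathcal V_r\subseteq\mathcal V$ of VNFs, duration $\tau_r$, load $\lambda_r\ge\lambda_{\min}=\inf_r\lambda_r>0$ ($\lambda_{\min}$ known), delay target $D_r$. For $v\in\mathcal V_r$, $(r,v)$ is a job. For a VM $b$ running $v$, $\Lambda(b)$ is the total load of its jobs; each job on $b$ experiences processing latency $1/(\mu_b-\theta_v\Lambda(b))$. Forwarding latency to layer $\ell$ is $d_\ell$, strictly increasing. The latency of $r$ is the maximum $d_\ell$ over layers hosting its jobs plus the sum of processing latencies. Fair delay allocation: $M_{r,v}=1/(\bar\mu-\theta_v\lambda_r)$; $\ell^*(r)$ is the highest layer $\ell$ with $d_\ell+\sum_{v}M_{r,v}\le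 D_r$; $D_r^v=\frac{M_{r,v}}{\sum_{u\in\mathcal V_r}M_{r,u}}(D_r-d_{\ell^*(r)})$. Feasible deployment of $r$: each job on a VM $b$ running $v$ with $\mu_b\le\bar\mu$ and $1/(\mu_b-\theta_v\Lambda(b))\le D_r^v$, and latency of $r$ at most $D_r$. Cost: a VM at a node of layer $\ell$ hosting at least one job costs $\kappa_f^\ell+\kappa_p^\ell\mu_b$, with $\kappa_f^\ell,\kappa_p^\ell$ strictly decreasing in $\ell$; $\kappa^\ell=\kappa_f^\ell+\kappa_p^\ell\bar\mu$. Latency ranges for $\varepsilon>0$: $L_0=[\frac{1}{\bar\mu-\lambda_{\min}},\frac{1}{\bar\mu-\lambda_{\min}(1+\varepsilon)}]$, $L_j=(\frac{1}{\bar\mu-\lambda_{\min}(1+\varepsilon)^j},\frac{1}{\bar\mu-\lambda_{\min}(1+\varepsilon)^{j+1}}]$, $j\ge1$; job $(r,v)$ is associated with $L_j$ if $D_r^v\in L_j$. c-REShare$(\varepsilon)$: on arrival of $r$, choose a node $i^*$ at layer $\ell^*(r)$; for each $v\in\mathcal V_r$ with $D_r^v\in L_j$, a VM in $i^*$ running $v$ and hosting jobs of $L_j$ is viable if running it at speed $\bar\mu$ with the added load $\lambda_r$ gives latency $\frac{1}{\bar\mu-\theta_v(\Lambda(b)+\lambda_r)}$ at most the fair delay allocation of $(r,v)$ and of every job already on it; place $(r,v)$ on the viable VM with largest $\Lambda(b)$ (capability set to $\theta_v\Lambda(b)+1/\min_{(r',v)\in b}D^v_{r'}$, including the new job), or on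 a new VM with capability $\theta_v\lambda_r+1/D_r^v$ if none is viable. SHA$(\varepsilon)$: each job associated with $L_j$ is replaced by a top job with the same load and delay constraint $D_j=\frac{1}{\bar\mu-\lambda_{\min}(1+\varepsilon)^{j+1}}$; SHA$(\varepsilon)$ is the minimum-cost placement of top jobs in which each job of $r$ is in a single node at a layer where deploying $r$ is feasible, a job's load may be split fractionally among VMs running $v$ in that node, jobs of different ranges never share a VM, and each top job meets its relaxed constraint. $\tilde\phi(\mathrm{SHA}(\varepsilon),\sigma)$ denotes the total cost of only the full VMs (running at capability $\bar\mu$) used by SHA$(\varepsilon)$ on input $\sigma$. REShare (parameter $\varepsilon^*>0$; $\log$ is natural logarithm): let $Z=[(2n+2)(1+\varepsilon^* )+1]\log(\bar\mu/\lambda_{\min})\,|\mathcal V|\sum_i\kappa^{\ell(i)}$, sum over all nodes $i$, $\ell(i)$ the layer of $i$. Initialize $q=1$, $h(1)=1$, $\varepsilon_1=\varepsilon^*$, $T_1=0$. For each arrival/departure of a request $r$: handle $r$ with c-REShare$(\varepsilon_{h(q)})$, using the latency ranges of $\varepsilon_{h(q)}$ (so jobs handled in different intervals never share VMs), and update a simulated SHA$(\varepsilon_{h(q)})$ run on the subsequence $\sigma_q$ of requests handled in the current interval $q$; let $Y_q^r=\tilde\phi(\mathrm{SHA}(\varepsilon_{h(q)}),\sigma_q^r)$ where $\sigma_q^r$ is $\sigma_q$ up to and including $r$. With $C_q=\frac{Z}{\varepsilon_{h(q)}\log(1+\varepsilon_{h(q)})}$ and $S_q=\frac{1}{\varepsilon_{h(q)}}\sum_{p=1}^{h(q)-1}(2+3\varepsilon_{p})\tilde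 Y_p$: if $Y_q^r\ge\max\{C_q,S_q\}$, set $\varepsilon_{h(q)+1}=\varepsilon_{h(q)}/2$, $T_{h(q)+1}=\Lambda$ (the current total system load), $\tilde Y_{h(q)}=Y_q^r$, $h(q+1)=h(q)+1$, $q\gets q+1$; else if $\Lambda<T_{h(q)}$, set $h(q+1)=h(q)-1$ and $q\gets q+1$. With infinite durations no departures occur, so $h(q)=q$. $\phi(\mathrm{REShare},\sigma_h)$ is the cost of the VMs used by REShare for the requests of interval $h$. *)

theory Defs
  imports Complex_Main
begin

text \<open>Abstract network (nodes with their layers), VNFs with complexities, VM maximum
capability, minimum load, forwarding latencies per layer, cost coefficients per layer,
and the REShare parameter eps_star.\<close>

record ('n, 'v) sys =
  s_nodes   :: "'n set"
  s_layer   :: "'n \<Rightarrow> nat"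
  s_vnfs    :: "'v set"
  s_theta   :: "'v \<Rightarrow> real"
  s_mubar   :: real
  s_lmin    :: real
  s_d       :: "nat \<Rightarrow> real"
  s_kf      :: "nat \<Rightarrow> real"
  s_kp      :: "nat \<Rightarrow> real"
  s_epsstar :: real

text \<open>A request: set of VNFs, load, delay target (durations are infinite, hence omitted).\<close>
record 'v req =
  r_V   :: "'v set"
  r_lam :: real
  r_D   :: real

definition Lmax :: "('n, 'v) sys \<Rightarrow> nat" where
  "Lmax S = Max (s_layer S ` s_nodes S)"

definition Mrv :: "('n, 'v) sys \<Rightarrow> 'v req \<Rightarrow> 'v \<Rightarrow> real" where
  "Mrv S r v = 1 / (s_mubar S - s_theta S v * r_lam r)"

definition SumM :: "('n, 'v) sys \<Rightarrow> 'v req \<Rightarrow> real" where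
  "SumM S r = (\<Sum>u\<in>r_V r. Mrv S r u)"

text \<open>Deploying r at layer l is feasible (d_l + sum of minimal processing latencies within D_r).\<close>
definition feas_layer :: "('n, 'v) sys \<Rightarrow> 'v req \<Rightarrow> nat \<Rightarrow> bool" where
  "feas_layer S r l \<longleftrightarrow> s_d S l + SumM S r \<le> r_D r"

definition lstar :: "('n, 'v) sys \<Rightarrow> 'v req \<Rightarrow> nat" where
  "lstar S r = Max {l. l \<le> Lmax S \<and> feas_layer S r l}"

definition Dfair :: "('n, 'v) sys \<Rightarrow> 'v req \<Rightarrow> 'v \<Rightarrow> real" where
  "Dfair S r v = Mrv S r v / SumM S r * (r_D r - s_d S (lstar S r))"

definition in_range :: "('n, 'v) sys \<Rightarrow> real \<Rightarrow> nat \<Rightarrow> real \<Rightarrow> bool" where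
  "in_range S eps j x \<longleftrightarrow>
     (if j = 0 then 1 / (s_mubar S - s_lmin S) \<le> x \<and> x \<le> 1 / (s_mubar S - s_lmin S * (1 + eps))
      else 1 / (s_mubar S - s_lmin S * (1 + eps) ^ j) < x
           \<and> x \<le> 1 / (s_mubar S - s_lmin S * (1 + eps) ^ (j + 1)))"

definition rng_idx :: "('n, 'v) sys \<Rightarrow> real \<Rightarrow> real \<Rightarrow> nat" where
  "rng_idx S eps x = (THE j. in_range S eps j x)"

text \<open>Relaxed delay constraint of top jobs of range j.\<close>
definition Dtop :: "('n, 'v) sys \<Rightarrow> real \<Rightarrow> nat \<Rightarrow> real" where
  "Dtop S eps j = 1 / (s_mubar S - s_lmin S * (1 + eps) ^ (j + 1))"

definition kap :: "('n, 'v) sys \<Rightarrow> nat \<Rightarrow> real" where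
  "kap S l = s_kf S l + s_kp S l * s_mubar S"

definition Zc :: "('n, 'v) sys \<Rightarrow> real" where
  "Zc S = ((2 * real (card (s_nodes S)) + 2) * (1 + s_epsstar S) + 1)
          * ln (s_mubar S / s_lmin S) * real (card (s_vnfs S))
          * (\<Sum>i\<in>s_nodes S. kap S (s_layer S i))"

definition eps :: "('n, 'v) sys \<Rightarrow> nat \<Rightarrow> real" where
  "eps S h = s_epsstar S / 2 ^ (h - 1)"

section \<open>SHA(eps)\<close>

text \<open>A SHA VM: node, VNF, latency range, capability, and the (fractional) load it carries
from each request (requests are identified by their index in the request list).\<close>
record ('n, 'v) svm =
  sv_node :: 'n
  sv_vnf  :: 'v
  sv_rng  :: nat
  sv_cap  :: real
  sv_load :: "nat \<Rightarrow> real"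

type_synonym ('n, 'v) splacement = "(nat \<Rightarrow> 'v \<Rightarrow> 'n) \<times> ('n, 'v) svm list"

definition sv_Lam :: "nat set \<Rightarrow> ('n, 'v) svm \<Rightarrow> real" where
  "sv_Lam I b = (\<Sum>t\<in>I. sv_load b t)"

definition sha_valid ::
  "('n, 'v) sys \<Rightarrow> 'v req list \<Rightarrow> real \<Rightarrow> nat set \<Rightarrow> ('n, 'v) splacement \<Rightarrow> bool" where
  "sha_valid S rs e I P \<longleftrightarrow>
     (let asg = fst P; vms = snd P in
       (\<forall>t\<in>I. \<forall>v\<in>r_V (rs ! t).
           asg t v \<in> s_nodes S \<and> feas_layer S (rs ! t) (s_layer S (asg t v))
           \<and> (\<Sum>b\<leftarrow>vms. if sv_vnf b = v then sv_load b t else 0) = r_lam (rs ! t))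
     \<and> (\<forall>b\<in>set vms.
           sv_node b \<in> s_nodes S \<and> sv_cap b \<le> s_mubar S
           \<and> (\<forall>t. 0 \<le> sv_load b t)
           \<and> (\<forall>t. 0 < sv_load b t \<longrightarrow>
                 t \<in> I \<and> sv_vnf b \<in> r_V (rs ! t) \<and> asg t (sv_vnf b) = sv_node b
                 \<and> rng_idx S e (Dfair S (rs ! t) (sv_vnf b)) = sv_rng b)
           \<and> (0 < sv_Lam I b \<longrightarrow>
                 0 < sv_cap b - s_theta S (sv_vnf b) * sv_Lam I b
                 \<and> 1 / (sv_cap b - s_theta S (sv_vnf b) * sv_Lam I b) \<le> Dtop S e (sv_rng b))))"

definition sha_cost :: "('n, 'v) sys \<Rightarrow> nat set \<Rightarrow> ('n, 'v) splacement \<Rightarrow> real" where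
  "sha_cost S I P = (\<Sum>b\<leftarrow>snd P. if 0 < sv_Lam I b
      then s_kf S (s_layer S (sv_node b)) + s_kp S (s_layer S (sv_node b)) * sv_cap b else 0)"

definition sha_fullcost :: "('n, 'v) sys \<Rightarrow> nat set \<Rightarrow> ('n, 'v) splacement \<Rightarrow> real" where
  "sha_fullcost S I P = (\<Sum>b\<leftarrow>snd P. if 0 < sv_Lam I b \<and> sv_cap b = s_mubar S
      then s_kf S (s_layer S (sv_node b)) + s_kp S (s_layer S (sv_node b)) * sv_cap b else 0)"

definition sha_opt ::
  "('n, 'v) sys \<Rightarrow> 'v req list \<Rightarrow> real \<Rightarrow> nat set \<Rightarrow> ('n, 'v) splacement \<Rightarrow> bool" where
  "sha_opt S rs e I P \<longleftrightarrow> sha_valid S rs e I P \<and>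
     (\<forall>P'. sha_valid S rs e I P' \<longrightarrow> sha_cost S I P \<le> sha_cost S I P')"

definition sha_canonical :: "('n, 'v) sys \<Rightarrow> nat set \<Rightarrow> ('n, 'v) splacement \<Rightarrow> bool" where
  "sha_canonical S I P \<longleftrightarrow>
     (\<forall>a < length (snd P). \<forall>c < length (snd P).
        a \<noteq> c \<and> sv_node (snd P ! a) = sv_node (snd P ! c)
        \<and> sv_vnf (snd P ! a) = sv_vnf (snd P ! c) \<and> sv_rng (snd P ! a) = sv_rng (snd P ! c)
        \<and> 0 < sv_Lam I (snd P ! a) \<and> 0 < sv_Lam I (snd P ! c)
        \<longrightarrow> sv_cap (snd P ! a) = s_mubar S \<or> sv_cap (snd P ! c) = s_mubar S)"

text \<open>phi-tilde(SHA(eps), sigma): full-VM cost of (a fixed) canonical optimal SHA(eps) placement.\<close>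
definition phiSHA :: "('n, 'v) sys \<Rightarrow> 'v req list \<Rightarrow> real \<Rightarrow> nat set \<Rightarrow> real" where
  "phiSHA S rs e I = sha_fullcost S I (SOME P. sha_opt S rs e I P \<and> sha_canonical S I P)"

section \<open>REShare with infinite durations\<close>

text \<open>A REShare VM: node, VNF, latency range, interval in which it was opened, hosted jobs
(request indices).\<close>
record ('n, 'v) rvm =
  rv_node :: 'n
  rv_vnf  :: 'v
  rv_rng  :: nat
  rv_int  :: nat
  rv_jobs :: "nat list"

definition rv_Lam :: "'v req list \<Rightarrow> ('n, 'v) rvm \<Rightarrow> real" where
  "rv_Lam rs b = (\<Sum>t\<leftarrow>rv_jobs b. r_lam (rs ! t))"

definition rv_cap :: "('n, 'v) sys \<Rightarrow> 'v req list \<Rightarrow> ('n, 'v) rvm \<Rightarrow> real" where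
  "rv_cap S rs b = s_theta S (rv_vnf b) * rv_Lam rs b
     + 1 / Min ((\<lambda>t. Dfair S (rs ! t) (rv_vnf b)) ` set (rv_jobs b))"

definition rv_cost :: "('n, 'v) sys \<Rightarrow> 'v req list \<Rightarrow> ('n, 'v) rvm \<Rightarrow> real" where
  "rv_cost S rs b = s_kf S (s_layer S (rv_node b)) + s_kp S (s_layer S (rv_node b)) * rv_cap S rs b"

definition viable ::
  "('n, 'v) sys \<Rightarrow> 'v req list \<Rightarrow> nat \<Rightarrow> real \<Rightarrow> nat \<Rightarrow> 'n \<Rightarrow> 'v \<Rightarrow> ('n, 'v) rvm \<Rightarrow> bool" where
  "viable S rs q e t i v b \<longleftrightarrow>
     (let r = rs ! t; x = s_mubar S - s_theta S v * (rv_Lam rs b + r_lam r) in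
       rv_node b = i \<and> rv_vnf b = v \<and> rv_int b = q
       \<and> rv_rng b = rng_idx S e (Dfair S r v)
       \<and> 0 < x \<and> 1 / x \<le> Dfair S r v
       \<and> (\<forall>t'\<in>set (rv_jobs b). 1 / x \<le> Dfair S (rs ! t') v))"

definition place1 ::
  "('n, 'v) sys \<Rightarrow> 'v req list \<Rightarrow> nat \<Rightarrow> real \<Rightarrow> nat \<Rightarrow> 'n \<Rightarrow> 'v
    \<Rightarrow> ('n, 'v) rvm list \<Rightarrow> ('n, 'v) rvm list \<Rightarrow> bool" where
  "place1 S rs q e t i v vms vms' \<longleftrightarrow>
     (\<exists>k < length vms. viable S rs q e t i v (vms ! k)
        \<and> (\<forall>k' < length vms. viable S rs q e t i v (vms ! k') \<longrightarrow>
              rv_Lam rs (vms ! k') \<le> rv_Lam rs (vms ! k))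
        \<and> vms' = vms[k := (vms ! k)\<lparr>rv_jobs := rv_jobs (vms ! k) @ [t]\<rparr>])
   \<or> ((\<forall>k < length vms. \<not> viable S rs q e t i v (vms ! k))
        \<and> vms' = vms @ [\<lparr>rv_node = i, rv_vnf = v, rv_rng = rng_idx S e (Dfair S (rs ! t) v),
                         rv_int = q, rv_jobs = [t]\<rparr>])"

inductive place_all ::
  "('n, 'v) sys \<Rightarrow> 'v req list \<Rightarrow> nat \<Rightarrow> real \<Rightarrow> nat \<Rightarrow> 'n \<Rightarrow> 'v list
    \<Rightarrow> ('n, 'v) rvm list \<Rightarrow> ('n, 'v) rvm list \<Rightarrow> bool"
  for S rs q e t i where
  "place_all S rs q e t i [] vms vms"
| "place1 S rs q e t i v vms vms1 \<Longrightarrow> place_all S rs q e t i vs vms1 vms2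
     \<Longrightarrow> place_all S rs q e t i (v # vs) vms vms2"

text \<open>State: VMs, interval index of each handled request, and the recorded values
Y-tilde_1, ..., Y-tilde_{q-1}; the current interval is q = length st_Y + 1.\<close>
record ('n, 'v) rstate =
  st_vms :: "('n, 'v) rvm list"
  st_ivl :: "nat list"
  st_Y   :: "real list"

definition sigma_set :: "nat list \<Rightarrow> nat \<Rightarrow> nat set" where
  "sigma_set ivl h = {t. t < length ivl \<and> ivl ! t = h}"

definition Cq :: "('n, 'v) sys \<Rightarrow> nat \<Rightarrow> real" where
  "Cq S q = Zc S / (eps S q * ln (1 + eps S q))"

definition Sq :: "('n, 'v) sys \<Rightarrow> real list \<Rightarrow> nat \<Rightarrow> real" where
  "Sq S Ys q = 1 / eps S q * (\<Sum>p = 1..q - 1. (2 + 3 * eps S p) * Ys ! (p - 1))"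

definition step ::
  "('n, 'v) sys \<Rightarrow> 'v req list \<Rightarrow> ('n, 'v) rstate \<Rightarrow> ('n, 'v) rstate \<Rightarrow> bool" where
  "step S rs st st' \<longleftrightarrow>
     (let t = length (st_ivl st); r = rs ! t; q = length (st_Y st) + 1; e = eps S q;
          ivl' = st_ivl st @ [q]; Y = phiSHA S rs e (sigma_set ivl' q) in
       t < length rs
       \<and> (\<exists>i vs. i \<in> s_nodes S \<and> s_layer S i = lstar S r \<and> distinct vs \<and> set vs = r_V r
              \<and> place_all S rs q e t i vs (st_vms st) (st_vms st'))
       \<and> st_ivl st' = ivl'
       \<and> st_Y st' = (if max (Cq S q) (Sq S (st_Y st) q) \<le> Y then st_Y st @ [Y] else st_Y st))"

inductive reach :: "('n, 'v) sys \<Rightarrow> 'v req list \<Rightarrow> ('n, 'v) rstate \<Rightarrow> bool" for S rs where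
  "reach S rs \<lparr>st_vms = [], st_ivl = [], st_Y = []\<rparr>"
| "reach S rs st \<Longrightarrow> step S rs st st' \<Longrightarrow> reach S rs st'"

definition phiRES :: "('n, 'v) sys \<Rightarrow> 'v req list \<Rightarrow> ('n, 'v) rstate \<Rightarrow> nat \<Rightarrow> real" where
  "phiRES S rs st h = (\<Sum>b\<leftarrow>st_vms st. if rv_int b = h then rv_cost S rs b else 0)"

definition wf_sys :: "('n, 'v) sys \<Rightarrow> bool" where
  "wf_sys S \<longleftrightarrow>
     finite (s_nodes S) \<and> s_nodes S \<noteq> {}
     \<and> (\<forall>l \<le> Lmax S. \<exists>i\<in>s_nodes S. s_layer S i = l)
     \<and> finite (s_vnfs S) \<and> (\<forall>v\<in>s_vnfs S. 0 < s_theta S v \<and> s_theta S v \<le> 1)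
     \<and> 0 < s_mubar S \<and> 0 < s_lmin S
     \<and> (\<forall>l l'. l < l' \<and> l' \<le> Lmax S \<longrightarrow> s_d S l < s_d S l')
     \<and> (\<forall>l l'. l < l' \<and> l' \<le> Lmax S \<longrightarrow> s_kf S l' < s_kf S l \<and> s_kp S l' < s_kp S l)
     \<and> (\<forall>l \<le> Lmax S. 0 < s_kf S l \<and> 0 < s_kp S l)
     \<and> 0 < s_epsstar S"

definition wf_req :: "('n, 'v) sys \<Rightarrow> 'v req \<Rightarrow> bool" where
  "wf_req S r \<longleftrightarrow>
     r_V r \<subseteq> s_vnfs S \<and> s_lmin S \<le> r_lam r
     \<and> (\<forall>v\<in>r_V r. s_theta S v * r_lam r < s_mubar S)
     \<and> feas_layer S r 0
     \<and> (\<forall>v\<in>r_V r. \<forall>h\<ge>1. \<exists>j. in_range S (eps S h) j (Dfair S r v))"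

end

theory Submission
  imports Defs "HOL-Library.FuncSet"
begin

lemma inv_le_aux: "0 < (u::real) \<Longrightarrow> 0 < D \<Longrightarrow> D \<le> 1/u \<Longrightarrow> u \<le> 1/D"
  by (simp add: field_simps)

lemma inr_facts:
  assumes D: "0 < D" and ir: "in_range S e j D" and l: "0 < s_lmin S" and e: "0 < e"
  shows "0 < s_mubar S - s_lmin S * (1+e)^(j+1)"
    and "s_lmin S * (1+e)^j \<le> s_mubar S - 1/D"
    and "s_mubar S - 1/D \<le> s_lmin S * (1+e)^(j+1)"
proof -
  have up: "D \<le> 1 / (s_mubar S - s_lmin S * (1 + e) ^ (j + 1))"
    using ir by (auto simp: in_range_def split: if_splits)
  show pos: "0 < s_mubar S - s_lmin S * (1+e)^(j+1)"
  proof (rule ccontr)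
    assume "\<not> ?thesis"
    then have "1 / (s_mubar S - s_lmin S * (1 + e) ^ (j + 1)) \<le> 0" by simp
    with up D show False by linarith
  qed
  have "(1+e)^j \<le> (1+e)^(j+1)" using e by (simp add: power_increasing)
  then have "s_lmin S * (1+e)^j \<le> s_lmin S * (1+e)^(j+1)" using l by simp
  then have pos0: "0 < s_mubar S - s_lmin S * (1+e)^j" using pos by linarith
  show "s_lmin S * (1+e)^j \<le> s_mubar S - 1/D"
  proof (cases "j = 0")
    case True
    then have "1 / (s_mubar S - s_lmin S) \<le> D" using ir by (simp add: in_range_def)
    then have "1 / D \<le> s_mubar S - s_lmin S" using pos0 True D
      by (simp add: divide_simps mult.commute)
    then show ?thesis using True by simp
  next
    case False
    then have "1 / (s_mubar S - s_lmin S * (1+e)^j) < D" using ir by (simp add: in_range_def)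
    then have "1 / D < s_mubar S - s_lmin S * (1+e)^j" using pos0 D
      by (simp add: divide_simps mult.commute)
    then show ?thesis by simp
  qed
  show "s_mubar S - 1/D \<le> s_lmin S * (1+e)^(j+1)"
    using inv_le_aux[OF pos D up] by linarith
qed

lemma inr_unique:
  assumes D: "0 < D" and ir: "in_range S e j D" and ir': "in_range S e j' D"
    and l: "0 < s_lmin S" and e: "0 < e"
  shows "j = j'"
proof (rule ccontr)
  assume ne: "j \<noteq> j'"
  have key: False if a: "in_range S e a D" and b: "in_range S e b D" and ab: "a < b" for a b
  proof -
    have ub: "s_mubar S - 1/D \<le> s_lmin S * (1+e)^(a+1)" using inr_facts(3)[OF D a l e] .
    have b1: "b \<noteq> 0" using ab by simp
    have pb: "0 < s_mubar S - s_lmin S * (1+e)^(b+1)" using inr_facts(1)[OF D b l e] .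
    have "(1+e)^b \<le> (1+e)^(b+1)" using e by (simp add: power_increasing)
    then have pb0: "0 < s_mubar S - s_lmin S * (1+e)^b" using pb l
      by (smt (verit) mult_left_mono)
    have "1 / (s_mubar S - s_lmin S * (1+e)^b) < D" using b b1 by (simp add: in_range_def)
    then have lt: "1 / D < s_mubar S - s_lmin S * (1+e)^b" using pb0 D
      by (simp add: divide_simps mult.commute)
    have "(1+e)^(a+1) \<le> (1+e)^b" using e ab power_increasing[of "a+1" b "1+e"] by simp
    then have "s_lmin S * (1+e)^(a+1) \<le> s_lmin S * (1+e)^b" using l by simp
    with ub lt show False by linarith
  qed
  show False
    using ne key[OF ir ir'] key[OF ir' ir] by (cases "j < j'") auto
qed

lemma rng_idx_in:
  assumes "0 < D" "in_range S e j D" "0 < s_lmin S" "0 < e"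
  shows "in_range S e (rng_idx S e D) D" and "rng_idx S e D = j"
proof -
  have "\<exists>!j. in_range S e j D" using assms inr_unique by blast
  then show "in_range S e (rng_idx S e D) D" unfolding rng_idx_def by (rule theI')
  then show "rng_idx S e D = j" using inr_unique assms by blast
qed

lemma layer_le_Lmax: "wf_sys S \<Longrightarrow> i \<in> s_nodes S \<Longrightarrow> s_layer S i \<le> Lmax S"
  unfolding Lmax_def wf_sys_def by auto

lemma lstar_props:
  assumes S: "wf_sys S" and r: "wf_req S r"
  shows "feas_layer S r (lstar S r)" "lstar S r \<le> Lmax S"
    and "\<And>l. l \<le> Lmax S \<Longrightarrow> feas_layer S r l \<Longrightarrow> l \<le> lstar S r"
proof -
  let ?A = "{l. l \<le> Lmax S \<and> feas_layer S r l}"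
  have fin: "finite ?A" by (rule finite_subset[of _ "{..Lmax S}"]) auto
  have ne: "0 \<in> ?A" using r by (simp add: wf_req_def)
  have "lstar S r \<in> ?A" unfolding lstar_def using fin ne Max_in by blast
  then show "feas_layer S r (lstar S r)" "lstar S r \<le> Lmax S" by auto
  show "\<And>l. l \<le> Lmax S \<Longrightarrow> feas_layer S r l \<Longrightarrow> l \<le> lstar S r"
    unfolding lstar_def using fin by (simp add: Max_ge)
qed

lemma Mrv_pos: "wf_sys S \<Longrightarrow> wf_req S r \<Longrightarrow> v \<in> r_V r \<Longrightarrow> 0 < Mrv S r v"
  unfolding Mrv_def wf_req_def by auto

lemma SumM_ge:
  assumes S: "wf_sys S" and r: "wf_req S r" and v: "v \<in> r_V r"
  shows "Mrv S r v \<le> SumM S r"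
proof -
  have fin: "finite (r_V r)" using S r unfolding wf_sys_def wf_req_def using finite_subset by blast
  have "Mrv S r v = (\<Sum>u\<in>{v}. Mrv S r u)" by simp
  also have "\<dots> \<le> SumM S r" unfolding SumM_def
    by (rule sum_mono2[OF fin]) (use v Mrv_pos[OF S r] in \<open>auto simp: less_imp_le\<close>)
  finally show ?thesis .
qed

lemma Dfair_ge:
  assumes S: "wf_sys S" and r: "wf_req S r" and v: "v \<in> r_V r"
  shows "Mrv S r v \<le> Dfair S r v" "0 < Dfair S r v"
    "s_theta S v * r_lam r + 1 / Dfair S r v \<le> s_mubar S"
proof -
  have M: "0 < Mrv S r v" using Mrv_pos[OF S r v] .
  have SM: "Mrv S r v \<le> SumM S r" using SumM_ge[OF S r v] .
  have f: "s_d S (lstar S r) + SumM S r \<le> r_D r" using lstar_props(1)[OF S r] by (simp add: feas_layer_def)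
  have "1 \<le> (r_D r - s_d S (lstar S r)) / SumM S r" using f SM M by (simp add: divide_simps)
  then have "Mrv S r v * 1 \<le> Mrv S r v * ((r_D r - s_d S (lstar S r)) / SumM S r)"
    using M by (intro mult_left_mono) auto
  then show DM: "Mrv S r v \<le> Dfair S r v" unfolding Dfair_def by simp
  then show Dp: "0 < Dfair S r v" using M by linarith
  have tl: "s_theta S v * r_lam r < s_mubar S" using r v by (simp add: wf_req_def)
  have "1 / Dfair S r v \<le> 1 / Mrv S r v" using DM M by (simp add: frac_le)
  also have "\<dots> = s_mubar S - s_theta S v * r_lam r" unfolding Mrv_def using tl by simp
  finally show "s_theta S v * r_lam r + 1 / Dfair S r v \<le> s_mubar S" by simp
qed

lemma cost_mono:
  assumes S: "wf_sys S" and ll: "l \<le> l'" and l': "l' \<le> Lmax S"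
  shows "s_kf S l' \<le> s_kf S l" "s_kp S l' \<le> s_kp S l" "kap S l' \<le> kap S l"
proof -
  have h: "s_kf S l' \<le> s_kf S l \<and> s_kp S l' \<le> s_kp S l"
  proof (cases "l = l'")
    case False then show ?thesis using S ll l' unfolding wf_sys_def
      by (metis less_imp_le order_le_less)
  qed simp
  then show "s_kf S l' \<le> s_kf S l" "s_kp S l' \<le> s_kp S l" by auto
  have "0 < s_mubar S" using S by (simp add: wf_sys_def)
  then show "kap S l' \<le> kap S l" unfolding kap_def using h
    by (smt (verit) mult_right_mono)
qed

lemma cost_pos: "wf_sys S \<Longrightarrow> l \<le> Lmax S \<Longrightarrow> 0 < s_kf S l \<and> 0 < s_kp S l \<and> 0 < kap S l"
  unfolding wf_sys_def kap_def by (auto intro!: add_pos_pos mult_pos_pos)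

lemma vnfs_theta: "wf_sys S \<Longrightarrow> v \<in> s_vnfs S \<Longrightarrow> 0 < s_theta S v \<and> s_theta S v \<le> 1"
  unfolding wf_sys_def by auto

lemma req_vnf: "wf_req S r \<Longrightarrow> v \<in> r_V r \<Longrightarrow> v \<in> s_vnfs S"
  unfolding wf_req_def by auto

lemma eps_pos: "wf_sys S \<Longrightarrow> 0 < eps S h"
  unfolding eps_def wf_sys_def by auto

lemma eps_le: "wf_sys S \<Longrightarrow> 1 \<le> h \<Longrightarrow> eps S h \<le> s_epsstar S"
  unfolding eps_def wf_sys_def by (auto simp: divide_simps)

lemma eps_anti: "wf_sys S \<Longrightarrow> 1 \<le> h \<Longrightarrow> h \<le> k \<Longrightarrow> eps S k \<le> eps S h"
proof -
  assume S: "wf_sys S" and "1 \<le> h" "h \<le> k"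
  then have "(2::real)^(h-1) \<le> 2^(k-1)" by (intro power_increasing) auto
  then show ?thesis unfolding eps_def using S by (simp add: wf_sys_def frac_le)
qed

lemma job_range:
  assumes S: "wf_sys S" and r: "wf_req S r" and v: "v \<in> r_V r" and h: "1 \<le> h"
  shows "in_range S (eps S h) (rng_idx S (eps S h) (Dfair S r v)) (Dfair S r v)"
proof -
  obtain j where "in_range S (eps S h) j (Dfair S r v)" using r v h unfolding wf_req_def by blast
  moreover have "0 < s_lmin S" using S by (simp add: wf_sys_def)
  ultimately show ?thesis using rng_idx_in(1) Dfair_ge(2)[OF S r v] eps_pos[OF S]
    by blast
qed

definition cc :: "('n, 'v) sys \<Rightarrow> real \<Rightarrow> nat \<Rightarrow> real" where
  "cc S e j = s_lmin S * (1+e)^(j+1)"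

definition jr :: "('n, 'v) sys \<Rightarrow> 'v req list \<Rightarrow> real \<Rightarrow> nat \<Rightarrow> 'v \<Rightarrow> nat" where
  "jr S rs e t v = rng_idx S e (Dfair S (rs!t) v)"

definition Jset :: "('n, 'v) sys \<Rightarrow> real \<Rightarrow> nat set" where
  "Jset S e = {j. cc S e j < s_mubar S}"

lemma Dtop_cc: "Dtop S e j = 1 / (s_mubar S - cc S e j)"
  unfolding Dtop_def cc_def by simp

lemma sum_list_map_nth: "sum_list (map f xs) = (\<Sum>a<length xs. f (xs ! a))"
  by (simp add: sum_list_sum_nth atLeast0LessThan)

lemma Jset_finite:
  assumes S: "wf_sys S" and e: "0 < e"
  shows "finite (Jset S e)"
proof -
  have l: "0 < s_lmin S" using S by (simp add: wf_sys_def)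
  have "Jset S e \<subseteq> {..nat \<lceil>s_mubar S / (s_lmin S * e)\<rceil>}"
  proof
    fix j assume "j \<in> Jset S e"
    then have lt: "s_lmin S * (1+e)^(j+1) < s_mubar S" by (simp add: Jset_def cc_def)
    have "1 + real (j+1) * e \<le> (1+e)^(j+1)" using Bernoulli_inequality[of e "j+1"] e by simp
    then have "s_lmin S * (1 + real (j+1) * e) \<le> s_lmin S * (1+e)^(j+1)" using l by simp
    then have "s_lmin S * (real j * e) < s_mubar S" using lt l e
      by (smt (verit, ccfv_SIG) distrib_left mult_pos_pos of_nat_Suc ring_class.ring_distribs(2) Suc_eq_plus1)
    then have "real j < s_mubar S / (s_lmin S * e)" using l e by (simp add: field_simps)
    moreover have "s_mubar S / (s_lmin S * e) \<le> real (nat \<lceil>s_mubar S / (s_lmin S * e)\<rceil>)"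
      by (rule real_nat_ceiling_ge)
    ultimately have "real j \<le> real (nat \<lceil>s_mubar S / (s_lmin S * e)\<rceil>)" by linarith
    then show "j \<in> {..nat \<lceil>s_mubar S / (s_lmin S * e)\<rceil>}" by simp
  qed
  then show ?thesis using finite_subset by blast
qed

lemma Jset_card:
  assumes S: "wf_sys S" and e: "0 < e" and ne: "Jset S e \<noteq> {}"
  shows "real (card (Jset S e)) \<le> ln (s_mubar S / s_lmin S) / ln (1+e)"
proof -
  have l: "0 < s_lmin S" using S by (simp add: wf_sys_def)
  have fin: "finite (Jset S e)" using Jset_finite[OF S e] .
  define m where "m = Max (Jset S e)"
  have mJ: "m \<in> Jset S e" unfolding m_def using fin ne Max_in by blast
  have "Jset S e \<subseteq> {..m}" unfolding m_def using fin Max_ge by blast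
  then have "card (Jset S e) \<le> card {..m}" by (intro card_mono) auto
  then have c: "card (Jset S e) \<le> m + 1" by simp
  have lt: "s_lmin S * (1+e)^(m+1) < s_mubar S" using mJ by (simp add: Jset_def cc_def)
  have p1: "0 < s_lmin S * (1+e)^(m+1)" using l e by simp
  have "ln (s_lmin S * (1+e)^(m+1)) < ln (s_mubar S)" using lt p1 ln_less_cancel_iff[OF p1] by simp
  then have "ln (s_lmin S) + real (m+1) * ln (1+e) < ln (s_mubar S)"
  proof -
    have "ln (s_lmin S * (1+e)^(m+1)) = ln (s_lmin S) + ln ((1+e)^(m+1))"
      using l e by (intro ln_mult_pos) auto
    also have "ln ((1+e)^(m+1)) = real (m+1) * ln (1+e)" by (rule ln_realpow)
    finally show ?thesis using \<open>ln (s_lmin S * (1+e)^(m+1)) < ln (s_mubar S)\<close> by linarith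
  qed
  moreover have "0 < s_mubar S" using S by (simp add: wf_sys_def)
  ultimately have "real (m+1) * ln (1+e) < ln (s_mubar S / s_lmin S)" using l by (simp add: ln_div)
  then have "real (m+1) < ln (s_mubar S / s_lmin S) / ln (1+e)" using e by (simp add: field_simps)
  then show ?thesis using c by (smt (verit) of_nat_mono)
qed

lemma inv_le_rev: "0 < (x::real) \<Longrightarrow> 0 < y \<Longrightarrow> 1/x \<le> 1/y \<Longrightarrow> y \<le> x"
  by (simp add: divide_simps)

lemma sha_vm_cap:
  assumes S: "wf_sys S" and V: "sha_valid S rs e I P" and b: "b \<in> set (snd P)"
    and L: "0 < sv_Lam I b"
  shows "0 < s_mubar S - cc S e (sv_rng b)"
    and "s_theta S (sv_vnf b) * sv_Lam I b + (s_mubar S - cc S e (sv_rng b)) \<le> sv_cap b"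
    and "s_theta S (sv_vnf b) * sv_Lam I b \<le> cc S e (sv_rng b)"
proof -
  have c1: "sv_cap b \<le> s_mubar S" and
    c2: "0 < sv_cap b - s_theta S (sv_vnf b) * sv_Lam I b" and
    c3: "1 / (sv_cap b - s_theta S (sv_vnf b) * sv_Lam I b) \<le> Dtop S e (sv_rng b)"
    using V b L unfolding sha_valid_def Let_def by auto
  have c3': "1 / (sv_cap b - s_theta S (sv_vnf b) * sv_Lam I b) \<le> 1 / (s_mubar S - cc S e (sv_rng b))"
    using c3 by (simp add: Dtop_cc)
  show pos: "0 < s_mubar S - cc S e (sv_rng b)"
  proof (rule ccontr)
    assume "\<not> ?thesis"
    then have "1 / (s_mubar S - cc S e (sv_rng b)) \<le> 0" by simp
    moreover have "0 < 1 / (sv_cap b - s_theta S (sv_vnf b) * sv_Lam I b)" using c2 by simp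
    ultimately show False using c3' by linarith
  qed
  have "s_mubar S - cc S e (sv_rng b) \<le> sv_cap b - s_theta S (sv_vnf b) * sv_Lam I b"
    using inv_le_rev[OF c2 pos c3'] .
  then show "s_theta S (sv_vnf b) * sv_Lam I b + (s_mubar S - cc S e (sv_rng b)) \<le> sv_cap b" by simp
  then show "s_theta S (sv_vnf b) * sv_Lam I b \<le> cc S e (sv_rng b)" using c1 by simp
qed

lemma sum_pos_ex: "finite A \<Longrightarrow> (\<And>x. x \<in> A \<Longrightarrow> 0 \<le> f x) \<Longrightarrow> 0 < (\<Sum>x\<in>A. (f x::real)) \<Longrightarrow> \<exists>x\<in>A. 0 < f x"
  by (metis not_less sum_nonpos)

lemma triple_sum: "(\<Sum>i\<in>A. \<Sum>v\<in>B. \<Sum>j\<in>C. f i) = (\<Sum>x\<in>A \<times> (B \<times> C). (f (fst x)::real))"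
proof -
  have i: "(\<Sum>v\<in>B. \<Sum>j\<in>C. f i) = (\<Sum>y\<in>B \<times> C. f i)" for i
    using sum.cartesian_product[of "\<lambda>v j. f i" C B] by (simp add: split_def)
  have "(\<Sum>i\<in>A. \<Sum>y\<in>B \<times> C. f i) = (\<Sum>x\<in>A \<times> (B \<times> C). f (fst x))"
    using sum.cartesian_product[of "\<lambda>i y. f i" "B \<times> C" A] by (simp add: split_def)
  moreover have "(\<Sum>i\<in>A. \<Sum>v\<in>B. \<Sum>j\<in>C. f i) = (\<Sum>i\<in>A. \<Sum>y\<in>B \<times> C. f i)"
    by (rule sum.cong[OF refl], rule i)
  ultimately show ?thesis by simp
qed

lemma sha_charge:
  fixes S :: "('n, 'v) sys" and P :: "('n, 'v) splacement"
  assumes S: "wf_sys S" and e: "0 < e" and finI: "finite I"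
    and rsI: "\<forall>t\<in>I. wf_req S (rs!t)"
    and V: "sha_valid S rs e I P" and C: "sha_canonical S I P"
  shows "(\<Sum>t\<in>I. \<Sum>v\<in>r_V (rs!t). kap S (lstar S (rs!t)) * s_theta S v * r_lam (rs!t) / cc S e (jr S rs e t v))
     \<le> sha_fullcost S I P + (\<Sum>i\<in>s_nodes S. \<Sum>v\<in>s_vnfs S. \<Sum>j\<in>Jset S e. kap S (s_layer S i))"
proof -
  obtain asg vms where P: "P = (asg, vms)" by (cases P)
  define n where "n = length vms"
  define B where "B a = vms ! a" for a
  define kl where "kl a = kap S (s_layer S (sv_node (B a)))" for a
  define X where "X a t = kl a * s_theta S (sv_vnf (B a)) * sv_load (B a) t / cc S e (sv_rng (B a))" for a t
  note VV = V[unfolded sha_valid_def Let_def P fst_conv snd_conv]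
  have V1: "\<And>t v. t \<in> I \<Longrightarrow> v \<in> r_V (rs!t) \<Longrightarrow> asg t v \<in> s_nodes S \<and> feas_layer S (rs ! t) (s_layer S (asg t v))
           \<and> (\<Sum>b\<leftarrow>vms. if sv_vnf b = v then sv_load b t else 0) = r_lam (rs ! t)"
  proof -
    fix t v assume t: "t \<in> I" and v: "v \<in> r_V (rs!t)"
    show "asg t v \<in> s_nodes S \<and> feas_layer S (rs ! t) (s_layer S (asg t v))
           \<and> (\<Sum>b\<leftarrow>vms. if sv_vnf b = v then sv_load b t else 0) = r_lam (rs ! t)"
      using bspec[OF bspec[OF conjunct1[OF VV] t] v] .
  qed
  have V2: "\<And>b. b \<in> set vms \<Longrightarrow> sv_node b \<in> s_nodes S \<and> sv_cap b \<le> s_mubar S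
           \<and> (\<forall>t. 0 \<le> sv_load b t)
           \<and> (\<forall>t. 0 < sv_load b t \<longrightarrow>
                 t \<in> I \<and> sv_vnf b \<in> r_V (rs ! t) \<and> asg t (sv_vnf b) = sv_node b
                 \<and> rng_idx S e (Dfair S (rs ! t) (sv_vnf b)) = sv_rng b)"
  proof -
    fix b assume b: "b \<in> set vms"
    note h = bspec[OF conjunct2[OF VV] b]
    show "?thesis b" using h by (elim conjE) (intro conjI)
  qed
  have Bin: "\<And>a. a < n \<Longrightarrow> B a \<in> set vms" unfolding B_def n_def by simp
  have l: "0 < s_lmin S" using S by (simp add: wf_sys_def)
  have ccpos: "\<And>j. 0 < cc S e j" unfolding cc_def using l e by simp
  have klpos: "\<And>a. a < n \<Longrightarrow> 0 < kl a"
  proof -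
    fix a assume a: "a < n"
    have nd: "sv_node (B a) \<in> s_nodes S" using V2[OF Bin[OF a]] by simp
    show "0 < kl a" using cost_pos[OF S layer_le_Lmax[OF S nd]] by (simp add: kl_def)
  qed
  have ld0: "\<And>a t. a < n \<Longrightarrow> 0 \<le> sv_load (B a) t" using V2[OF Bin] by simp
  have thpos: "\<And>t v. t \<in> I \<Longrightarrow> v \<in> r_V (rs!t) \<Longrightarrow> 0 < s_theta S v"
    using vnfs_theta[OF S req_vnf] rsI by blast
  define K where "K t v = kap S (lstar S (rs!t)) * s_theta S v / cc S e (jr S rs e t v)" for t v
  have step1: "kap S (lstar S (rs!t)) * s_theta S v * r_lam (rs!t) / cc S e (jr S rs e t v)
      = (\<Sum>a<n. if sv_vnf (B a) = v then K t v * sv_load (B a) t else 0)"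
    if t: "t \<in> I" and v: "v \<in> r_V (rs!t)" for t v
  proof -
    have "kap S (lstar S (rs!t)) * s_theta S v * r_lam (rs!t) / cc S e (jr S rs e t v) = K t v * r_lam (rs!t)"
      unfolding K_def by simp
    also have "K t v * r_lam (rs!t) = K t v * (\<Sum>a<n. if sv_vnf (B a) = v then sv_load (B a) t else 0)"
      using V1[OF t v] unfolding sum_list_map_nth n_def B_def by simp
    also have "K t v * (\<Sum>a<n. if sv_vnf (B a) = v then sv_load (B a) t else 0)
      = (\<Sum>a<n. if sv_vnf (B a) = v then K t v * sv_load (B a) t else 0)"
      unfolding sum_distrib_left by (rule sum.cong) auto
    finally show ?thesis .
  qed
  have step2: "(if sv_vnf (B a) = v then K t v * sv_load (B a) t else 0) \<le> (if sv_vnf (B a) = v then X a t else 0)"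
    if t: "t \<in> I" and v: "v \<in> r_V (rs!t)" and a: "a < n" for t v a
  proof (cases "sv_vnf (B a) = v")
    case True
    show ?thesis
    proof (cases "sv_load (B a) t = 0")
      case True then show ?thesis by (simp add: X_def)
    next
      case False
      then have lp: "0 < sv_load (B a) t" using ld0[OF a, of t] by simp
      then have h: "asg t v = sv_node (B a) \<and> rng_idx S e (Dfair S (rs ! t) v) = sv_rng (B a)"
        using V2[OF Bin[OF a]] True by auto
      have nd: "asg t v \<in> s_nodes S" and fl: "feas_layer S (rs ! t) (s_layer S (asg t v))" using V1[OF t v] by auto
      have "s_layer S (asg t v) \<le> lstar S (rs!t)"
        using lstar_props(3)[OF S rsI[rule_format, OF t] layer_le_Lmax[OF S nd] fl] .
      then have kk: "kap S (lstar S (rs!t)) \<le> kl a"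
        unfolding kl_def using h cost_mono(3)[OF S _ lstar_props(2)[OF S rsI[rule_format, OF t]]] by metis
      have jj: "jr S rs e t v = sv_rng (B a)" unfolding jr_def using h by simp
      have "K t v * sv_load (B a) t = kap S (lstar S (rs!t)) * (s_theta S v * sv_load (B a) t / cc S e (sv_rng (B a)))"
        unfolding K_def jj by simp
      also have "\<dots> \<le> kl a * (s_theta S v * sv_load (B a) t / cc S e (sv_rng (B a)))"
        using kk thpos[OF t v] lp ccpos[of "sv_rng (B a)"] by (intro mult_right_mono) auto
      also have "\<dots> = X a t" unfolding X_def using True by simp
      finally show ?thesis using True by simp
    qed
  qed simp
  have Xz: "X a t = 0" if a: "a < n" and "t \<in> I" and nv: "sv_vnf (B a) \<notin> r_V (rs!t)" for a t
  proof -
    have "\<not> 0 < sv_load (B a) t" using V2[OF Bin[OF a]] nv by blast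
    then have "sv_load (B a) t = 0" using ld0[OF a, of t] by simp
    then show ?thesis by (simp add: X_def)
  qed
  have finV: "\<And>t. t \<in> I \<Longrightarrow> finite (r_V (rs!t))"
    using rsI S unfolding wf_req_def wf_sys_def by (meson finite_subset)
  define Lm where "Lm a = sv_Lam I (B a)" for a
  have "(\<Sum>t\<in>I. \<Sum>v\<in>r_V (rs!t). kap S (lstar S (rs!t)) * s_theta S v * r_lam (rs!t) / cc S e (jr S rs e t v))
      = (\<Sum>t\<in>I. \<Sum>v\<in>r_V (rs!t). \<Sum>a<n. if sv_vnf (B a) = v then K t v * sv_load (B a) t else 0)"
    using step1 by simp
  also have "\<dots> \<le> (\<Sum>t\<in>I. \<Sum>v\<in>r_V (rs!t). \<Sum>a<n. if sv_vnf (B a) = v then X a t else 0)"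
    using step2 by (intro sum_mono) auto
  also have "\<dots> = (\<Sum>t\<in>I. \<Sum>a<n. \<Sum>v\<in>r_V (rs!t). if sv_vnf (B a) = v then X a t else 0)"
    by (intro sum.cong refl sum.swap)
  also have "\<dots> = (\<Sum>t\<in>I. \<Sum>a<n. if sv_vnf (B a) \<in> r_V (rs!t) then X a t else 0)"
    using finV by (intro sum.cong refl) simp
  also have "\<dots> = (\<Sum>t\<in>I. \<Sum>a<n. X a t)"
    using Xz by (intro sum.cong refl) auto
  also have "\<dots> = (\<Sum>a<n. \<Sum>t\<in>I. X a t)" by (rule sum.swap)
  also have "\<dots> = (\<Sum>a<n. kl a * s_theta S (sv_vnf (B a)) * Lm a / cc S e (sv_rng (B a)))"
    unfolding X_def Lm_def sv_Lam_def by (simp add: sum_distrib_left sum_divide_distrib)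
  finally have A1: "(\<Sum>t\<in>I. \<Sum>v\<in>r_V (rs!t). kap S (lstar S (rs!t)) * s_theta S v * r_lam (rs!t) / cc S e (jr S rs e t v))
      \<le> (\<Sum>a<n. kl a * s_theta S (sv_vnf (B a)) * Lm a / cc S e (sv_rng (B a)))" .
  define FT where "FT b = (if 0 < sv_Lam I b \<and> sv_cap b = s_mubar S
      then s_kf S (s_layer S (sv_node b)) + s_kp S (s_layer S (sv_node b)) * sv_cap b else 0)" for b :: "('n, 'v) svm"
  define Part where "Part = {a \<in> {..<n}. 0 < Lm a \<and> sv_cap (B a) \<noteq> s_mubar S}"
  have Lm0: "\<And>a. a < n \<Longrightarrow> 0 \<le> Lm a" unfolding Lm_def sv_Lam_def using ld0 by (simp add: sum_nonneg)
  have FT0: "\<And>a. a < n \<Longrightarrow> 0 \<le> FT (B a)"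
    unfolding FT_def using klpos unfolding kl_def kap_def by (auto simp: less_imp_le)
  have step4: "kl a * s_theta S (sv_vnf (B a)) * Lm a / cc S e (sv_rng (B a))
      \<le> FT (B a) + (if a \<in> Part then kl a else 0)" if a: "a < n" for a
  proof (cases "0 < Lm a")
    case False
    then have "Lm a = 0" using Lm0[OF a] by simp
    then show ?thesis using FT0[OF a] klpos[OF a] by simp
  next
    case True
    have "s_theta S (sv_vnf (B a)) * Lm a \<le> cc S e (sv_rng (B a))"
      using sha_vm_cap(3)[OF S V _ ] Bin[OF a] True unfolding Lm_def P by simp
    then have "s_theta S (sv_vnf (B a)) * Lm a / cc S e (sv_rng (B a)) \<le> 1"
      using ccpos by simp
    then have "kl a * (s_theta S (sv_vnf (B a)) * Lm a / cc S e (sv_rng (B a))) \<le> kl a"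
      using klpos[OF a] mult_left_le[of "s_theta S (sv_vnf (B a)) * Lm a / cc S e (sv_rng (B a))" "kl a"] by linarith
    moreover have "kl a \<le> FT (B a) + (if a \<in> Part then kl a else 0)"
      using True a unfolding FT_def Part_def kl_def kap_def Lm_def by auto
    ultimately show ?thesis by simp
  qed
  have "(\<Sum>a<n. kl a * s_theta S (sv_vnf (B a)) * Lm a / cc S e (sv_rng (B a)))
      \<le> (\<Sum>a<n. FT (B a) + (if a \<in> Part then kl a else 0))"
    using step4 by (intro sum_mono) auto
  also have "\<dots> = (\<Sum>a<n. FT (B a)) + (\<Sum>a<n. if a \<in> Part then kl a else 0)"
    by (simp add: sum.distrib)
  also have "(\<Sum>a<n. FT (B a)) = sha_fullcost S I P"
    unfolding sha_fullcost_def P FT_def B_def n_def by (simp add: sum_list_map_nth)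
  also have "(\<Sum>a<n. if a \<in> Part then kl a else 0) = (\<Sum>a\<in>Part. kl a)"
  proof -
    have "(\<Sum>a<n. if a \<in> Part then kl a else 0) = (\<Sum>a<n. if 0 < Lm a \<and> sv_cap (B a) \<noteq> s_mubar S then kl a else 0)"
      by (rule sum.cong) (auto simp: Part_def)
    also have "\<dots> = (\<Sum>a\<in>Part. kl a)" unfolding Part_def by (rule sum.inter_filter[symmetric]) simp
    finally show ?thesis .
  qed
  finally have A2: "(\<Sum>a<n. kl a * s_theta S (sv_vnf (B a)) * Lm a / cc S e (sv_rng (B a)))
      \<le> sha_fullcost S I P + (\<Sum>a\<in>Part. kl a)" .
  have Cc: "\<And>a c. a < n \<Longrightarrow> c < n \<Longrightarrow> a \<noteq> c \<Longrightarrow> sv_node (B a) = sv_node (B c) \<Longrightarrow>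
      sv_vnf (B a) = sv_vnf (B c) \<Longrightarrow> sv_rng (B a) = sv_rng (B c) \<Longrightarrow> 0 < Lm a \<Longrightarrow> 0 < Lm c \<Longrightarrow>
      sv_cap (B a) = s_mubar S \<or> sv_cap (B c) = s_mubar S"
    using C unfolding sha_canonical_def P snd_conv B_def n_def Lm_def by simp
  define lab where "lab a = (sv_node (B a), sv_vnf (B a), sv_rng (B a))" for a
  define T where "T = s_nodes S \<times> (s_vnfs S \<times> Jset S e)"
  have inj: "inj_on lab Part"
  proof (rule inj_onI)
    fix a c assume a: "a \<in> Part" and c: "c \<in> Part" and lc: "lab a = lab c"
    show "a = c"
    proof (rule ccontr)
      assume "a \<noteq> c"
      moreover have "a < n" "c < n" "0 < Lm a" "0 < Lm c" "sv_cap (B a) \<noteq> s_mubar S" "sv_cap (B c) \<noteq> s_mubar S"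
        using a c unfolding Part_def by auto
      moreover have "sv_node (B a) = sv_node (B c)" "sv_vnf (B a) = sv_vnf (B c)" "sv_rng (B a) = sv_rng (B c)"
        using lc unfolding lab_def by auto
      ultimately show False using Cc by blast
    qed
  qed
  have sub: "lab ` Part \<subseteq> T"
  proof
    fix x assume "x \<in> lab ` Part"
    then obtain a where a: "a \<in> Part" and x: "x = lab a" by blast
    have an: "a < n" and Lp: "0 < Lm a" using a unfolding Part_def by auto
    have "0 < s_mubar S - cc S e (sv_rng (B a))"
      using sha_vm_cap(1)[OF S V _ ] Bin[OF an] Lp unfolding Lm_def P by simp
    then have j: "sv_rng (B a) \<in> Jset S e" unfolding Jset_def by simp
    obtain t where t: "t \<in> I" and lt: "0 < sv_load (B a) t"
    proof -
      have "\<exists>t\<in>I. 0 < sv_load (B a) t"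
        using sum_pos_ex[OF finI, of "sv_load (B a)"] ld0[OF an] Lp unfolding Lm_def sv_Lam_def by simp
      then show ?thesis using that by blast
    qed
    then have "sv_vnf (B a) \<in> r_V (rs!t)" using V2[OF Bin[OF an]] by simp
    then have v: "sv_vnf (B a) \<in> s_vnfs S" using req_vnf[OF rsI[rule_format, OF t]] by simp
    have "sv_node (B a) \<in> s_nodes S" using V2[OF Bin[OF an]] by simp
    then show "x \<in> T" unfolding T_def x lab_def using v j by simp
  qed
  have finT: "finite T" unfolding T_def using S Jset_finite[OF S e] by (simp add: wf_sys_def)
  have "(\<Sum>a\<in>Part. kl a) = (\<Sum>x\<in>lab ` Part. kap S (s_layer S (fst x)))"
    using sum.reindex[OF inj, of "\<lambda>x. kap S (s_layer S (fst x))"] by (simp add: kl_def lab_def)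
  also have "\<dots> \<le> (\<Sum>x\<in>T. kap S (s_layer S (fst x)))"
  proof (rule sum_mono2[OF finT sub])
    fix x assume "x \<in> T - lab ` Part"
    then have "fst x \<in> s_nodes S" unfolding T_def by auto
    then show "0 \<le> kap S (s_layer S (fst x))"
      using cost_pos[OF S layer_le_Lmax[OF S]] by (simp add: less_imp_le)
  qed
  also have "\<dots> = (\<Sum>i\<in>s_nodes S. \<Sum>v\<in>s_vnfs S. \<Sum>j\<in>Jset S e. kap S (s_layer S i))"
    unfolding T_def by (rule triple_sum[symmetric])
  finally show ?thesis using A1 A2 by linarith
qed

lemma sum_list_concat': "sum_list (concat xss) = sum_list (map sum_list (xss :: real list list))"
  by (induct xss) auto

locale shactx =
  fixes S :: "('n, 'v) sys" and rs :: "'v req list" and e :: real and I :: "nat set"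
  assumes S: "wf_sys S" and e: "0 < e" and finI: "finite I"
    and rsI: "\<And>t. t \<in> I \<Longrightarrow> wf_req S (rs!t)"
    and inr: "\<And>t v. t \<in> I \<Longrightarrow> v \<in> r_V (rs!t) \<Longrightarrow> in_range S e (jr S rs e t v) (Dfair S (rs!t) v)"
begin

definition inG :: "(nat \<Rightarrow> 'v \<Rightarrow> 'n) \<Rightarrow> nat \<Rightarrow> 'n \<times> 'v \<times> nat \<Rightarrow> bool" where
  "inG asg t g \<longleftrightarrow> t \<in> I \<and> fst (snd g) \<in> r_V (rs!t) \<and> asg t (fst (snd g)) = fst g
      \<and> jr S rs e t (fst (snd g)) = snd (snd g)"

definition Lg :: "(nat \<Rightarrow> 'v \<Rightarrow> 'n) \<Rightarrow> 'n \<times> 'v \<times> nat \<Rightarrow> real" where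
  "Lg asg g = (\<Sum>t\<in>I. if inG asg t g then r_lam (rs!t) else 0)"

definition Gs :: "(nat \<Rightarrow> 'v \<Rightarrow> 'n) \<Rightarrow> ('n \<times> 'v \<times> nat) set" where
  "Gs asg = (\<lambda>(t, v). (asg t v, v, jr S rs e t v)) ` Sigma I (\<lambda>t. r_V (rs!t))"

definition thg :: "'n \<times> 'v \<times> nat \<Rightarrow> real" where "thg g = s_theta S (fst (snd g))"
definition ccg :: "'n \<times> 'v \<times> nat \<Rightarrow> real" where "ccg g = cc S e (snd (snd g))"

definition kg :: "(nat \<Rightarrow> 'v \<Rightarrow> 'n) \<Rightarrow> 'n \<times> 'v \<times> nat \<Rightarrow> nat" where
  "kg asg g = nat \<lceil>thg g * Lg asg g / ccg g\<rceil>"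

definition mkvm :: "(nat \<Rightarrow> 'v \<Rightarrow> 'n) \<Rightarrow> 'n \<times> 'v \<times> nat \<Rightarrow> real \<Rightarrow> ('n, 'v) svm" where
  "mkvm asg g a = \<lparr>sv_node = fst g, sv_vnf = fst (snd g), sv_rng = snd (snd g),
     sv_cap = thg g * a * Lg asg g + (s_mubar S - ccg g),
     sv_load = (\<lambda>t. if inG asg t g then a * r_lam (rs!t) else 0)\<rparr>"

definition fr :: "(nat \<Rightarrow> 'v \<Rightarrow> 'n) \<Rightarrow> 'n \<times> 'v \<times> nat \<Rightarrow> real" where
  "fr asg g = ccg g / (thg g * Lg asg g)"
definition ls :: "(nat \<Rightarrow> 'v \<Rightarrow> 'n) \<Rightarrow> 'n \<times> 'v \<times> nat \<Rightarrow> real" where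
  "ls asg g = 1 - (real (kg asg g) - 1) * ccg g / (thg g * Lg asg g)"

definition glist :: "(nat \<Rightarrow> 'v \<Rightarrow> 'n) \<Rightarrow> ('n \<times> 'v \<times> nat) list" where
  "glist asg = (SOME xs. set xs = Gs asg \<and> distinct xs)"

definition fulls :: "(nat \<Rightarrow> 'v \<Rightarrow> 'n) \<Rightarrow> ('n, 'v) svm list" where
  "fulls asg = concat (map (\<lambda>g. replicate (kg asg g - 1) (mkvm asg g (fr asg g))) (glist asg))"
definition lasts :: "(nat \<Rightarrow> 'v \<Rightarrow> 'n) \<Rightarrow> ('n, 'v) svm list" where
  "lasts asg = map (\<lambda>g. mkvm asg g (ls asg g)) (glist asg)"

definition LBg :: "(nat \<Rightarrow> 'v \<Rightarrow> 'n) \<Rightarrow> 'n \<times> 'v \<times> nat \<Rightarrow> real" where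
  "LBg asg g = real (kg asg g) * (s_kf S (s_layer S (fst g)) + s_kp S (s_layer S (fst g)) * (s_mubar S - ccg g))
     + s_kp S (s_layer S (fst g)) * thg g * Lg asg g"

definition LB :: "(nat \<Rightarrow> 'v \<Rightarrow> 'n) \<Rightarrow> real" where
  "LB asg = (\<Sum>g\<in>Gs asg. LBg asg g)"

definition asg_ok :: "(nat \<Rightarrow> 'v \<Rightarrow> 'n) \<Rightarrow> bool" where
  "asg_ok asg \<longleftrightarrow> (\<forall>t\<in>I. \<forall>v\<in>r_V (rs!t). asg t v \<in> s_nodes S \<and> feas_layer S (rs ! t) (s_layer S (asg t v)))"

lemma finV: "t \<in> I \<Longrightarrow> finite (r_V (rs!t))"
  using rsI S unfolding wf_req_def wf_sys_def by (meson finite_subset)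

lemma finGs: "finite (Gs asg)"
  unfolding Gs_def using finI finV by auto

lemma glist: "set (glist asg) = Gs asg" "distinct (glist asg)"
proof -
  have "\<exists>xs. set xs = Gs asg \<and> distinct xs" using finite_distinct_list[OF finGs] .
  then have "set (glist asg) = Gs asg \<and> distinct (glist asg)" unfolding glist_def by (rule someI_ex)
  then show "set (glist asg) = Gs asg" "distinct (glist asg)" by auto
qed

lemma lmin_pos: "0 < s_lmin S" using S by (simp add: wf_sys_def)

lemma ccg_pos: "0 < ccg g" unfolding ccg_def cc_def using lmin_pos e by simp

lemma Gs_facts:
  assumes ok: "asg_ok asg" and g: "g \<in> Gs asg"
  shows "0 < Lg asg g" "0 < thg g" "0 < s_mubar S - ccg g" "fst g \<in> s_nodes S"
    "fst (snd g) \<in> s_vnfs S" "snd (snd g) \<in> Jset S e"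
proof -
  obtain t v where t: "t \<in> I" and v: "v \<in> r_V (rs!t)" and gg: "g = (asg t v, v, jr S rs e t v)"
    using g unfolding Gs_def by auto
  have r: "wf_req S (rs!t)" using rsI[OF t] .
  have ig: "inG asg t g" unfolding inG_def gg using t v by simp
  have "s_lmin S \<le> r_lam (rs!t)" using r by (simp add: wf_req_def)
  then have lp: "0 < r_lam (rs!t)" using lmin_pos by linarith
  have "(if inG asg t g then r_lam (rs!t) else 0) \<le> Lg asg g"
    unfolding Lg_def
  proof (rule member_le_sum[OF t _ finI])
    fix x assume x: "x \<in> I - {t}"
    have "s_lmin S \<le> r_lam (rs!x)" using rsI[of x] x by (simp add: wf_req_def)
    then show "0 \<le> (if inG asg x g then r_lam (rs!x) else 0)" using lmin_pos by simp
  qed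
  then show "0 < Lg asg g" using ig lp by simp
  show "0 < thg g" unfolding thg_def gg using vnfs_theta[OF S req_vnf[OF r v]] by simp
  have "0 < s_mubar S - s_lmin S * (1 + e) ^ (jr S rs e t v + 1)"
    using inr_facts(1)[OF Dfair_ge(2)[OF S r v] inr[OF t v] lmin_pos e] .
  then show "0 < s_mubar S - ccg g" unfolding ccg_def cc_def gg by simp
  then show "snd (snd g) \<in> Jset S e" unfolding Jset_def ccg_def by simp
  show "fst g \<in> s_nodes S" using ok t v unfolding asg_ok_def gg by simp
  show "fst (snd g) \<in> s_vnfs S" unfolding gg using req_vnf[OF r v] by simp
qed

lemma kg_facts:
  assumes ok: "asg_ok asg" and g: "g \<in> Gs asg"
  shows "1 \<le> kg asg g" "thg g * Lg asg g / ccg g \<le> real (kg asg g)"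
    "real (kg asg g) - 1 < thg g * Lg asg g / ccg g"
proof -
  have x: "0 < thg g * Lg asg g / ccg g" using Gs_facts[OF ok g] ccg_pos by simp
  show k1: "thg g * Lg asg g / ccg g \<le> real (kg asg g)" unfolding kg_def by (rule real_nat_ceiling_ge)
  then have "0 < real (kg asg g)" using x by linarith
  then show "1 \<le> kg asg g" by simp
  show "real (kg asg g) - 1 < thg g * Lg asg g / ccg g" unfolding kg_def using x by linarith
qed

lemma frac_facts:
  assumes ok: "asg_ok asg" and g: "g \<in> Gs asg" and a: "a = fr asg g \<or> a = ls asg g"
  shows "0 < a" "thg g * a * Lg asg g \<le> ccg g"
proof -
  have L: "0 < Lg asg g" and th: "0 < thg g" using Gs_facts[OF ok g] by auto
  have c: "0 < ccg g" by (rule ccg_pos)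
  define x where "x = thg g * Lg asg g / ccg g"
  have xp: "0 < x" unfolding x_def using L th c by simp
  have k1: "x \<le> real (kg asg g)" and k2: "real (kg asg g) - 1 < x" using kg_facts[OF ok g] unfolding x_def by auto
  have frx: "fr asg g = 1 / x" unfolding fr_def x_def by simp
  have lsx: "ls asg g = 1 - (real (kg asg g) - 1) / x" unfolding ls_def x_def by (simp add: field_simps)
  have cx: "thg g * Lg asg g = x * ccg g" unfolding x_def using c by simp
  have fr_ok: "0 < fr asg g \<and> fr asg g * x \<le> 1" using frx xp by simp
  have lsm: "ls asg g * x = x - (real (kg asg g) - 1)" using lsx xp by (simp add: field_simps)
  have "(real (kg asg g) - 1) / x < 1" using k2 xp by (simp add: divide_simps)
  then have ls_ok: "0 < ls asg g \<and> ls asg g * x \<le> 1" using lsx lsm k1 by simp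
  show "0 < a" using a fr_ok ls_ok by auto
  have eq: "thg g * a * Lg asg g = a * x * ccg g" using cx by (simp add: algebra_simps)
  have "a * x \<le> 1" using a fr_ok ls_ok by auto
  then have "a * x * ccg g \<le> 1 * ccg g" using c by (intro mult_right_mono) auto
  then show "thg g * a * Lg asg g \<le> ccg g" unfolding eq by simp
qed

lemma frac_sum:
  assumes ok: "asg_ok asg" and g: "g \<in> Gs asg"
  shows "real (kg asg g - 1) * fr asg g + ls asg g = 1"
proof -
  have L: "0 < Lg asg g" and th: "0 < thg g" using Gs_facts[OF ok g] by auto
  have "1 \<le> kg asg g" using kg_facts[OF ok g] by simp
  then have "real (kg asg g - 1) = real (kg asg g) - 1" by simp
  then show ?thesis unfolding fr_def ls_def using L th ccg_pos[of g] by (simp add: field_simps)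
qed

lemma Lam_mkvm: "sv_Lam I (mkvm asg g a) = a * Lg asg g"
  unfolding sv_Lam_def mkvm_def Lg_def by (simp add: sum_distrib_left if_distrib cong: if_cong)

lemma sum_N:
  "sum_list (map F (fulls asg @ lasts asg))
    = (\<Sum>g\<in>Gs asg. real (kg asg g - 1) * F (mkvm asg g (fr asg g)) + F (mkvm asg g (ls asg g)))"
proof -
  have "sum_list (map F (fulls asg)) = (\<Sum>g\<leftarrow>glist asg. real (kg asg g - 1) * F (mkvm asg g (fr asg g)))"
    unfolding fulls_def by (simp add: map_concat sum_list_concat' sum_list_replicate o_def)
  also have "\<dots> = (\<Sum>g\<in>Gs asg. real (kg asg g - 1) * F (mkvm asg g (fr asg g)))"
    using sum_list_distinct_conv_sum_set[OF glist(2)] glist(1) by simp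
  finally have 1: "sum_list (map F (fulls asg)) = (\<Sum>g\<in>Gs asg. real (kg asg g - 1) * F (mkvm asg g (fr asg g)))" .
  have 2: "sum_list (map F (lasts asg)) = (\<Sum>g\<in>Gs asg. F (mkvm asg g (ls asg g)))"
    unfolding lasts_def using sum_list_distinct_conv_sum_set[OF glist(2)] glist(1) by (simp add: o_def)
  show ?thesis using 1 2 by (simp add: sum.distrib)
qed

lemma set_fulls: "b \<in> set (fulls asg) \<Longrightarrow> \<exists>g\<in>Gs asg. b = mkvm asg g (fr asg g)"
proof -
  assume "b \<in> set (fulls asg)"
  then obtain g where g: "g \<in> set (glist asg)" and "b \<in> set (replicate (kg asg g - 1) (mkvm asg g (fr asg g)))"
    unfolding fulls_def by auto
  then have "b = mkvm asg g (fr asg g)" by (meson in_set_replicate)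
  then show ?thesis using g glist(1) by blast
qed

lemma set_N:
  assumes "b \<in> set (fulls asg @ lasts asg)"
  shows "\<exists>g\<in>Gs asg. b = mkvm asg g (fr asg g) \<or> b = mkvm asg g (ls asg g)"
proof -
  have "b \<in> set (fulls asg) \<or> b \<in> set (lasts asg)" using assms by simp
  then show ?thesis
  proof
    assume "b \<in> set (fulls asg)"
    then obtain g where g: "g \<in> set (glist asg)" and "b \<in> set (replicate (kg asg g - 1) (mkvm asg g (fr asg g)))"
      unfolding fulls_def by auto
    then have "b = mkvm asg g (fr asg g)" by (meson in_set_replicate)
    then show ?thesis using g glist(1) by blast
  next
    assume "b \<in> set (lasts asg)"
    then obtain g where g: "g \<in> set (glist asg)" and "b = mkvm asg g (ls asg g)"
      unfolding lasts_def by auto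
    then show ?thesis using glist(1) by blast
  qed
qed

end

context shactx begin

lemma mkvm_valid:
  assumes ok: "asg_ok asg" and g: "g \<in> Gs asg" and a: "a = fr asg g \<or> a = ls asg g"
  and b: "b = mkvm asg g a"
  shows "sv_node b \<in> s_nodes S \<and> sv_cap b \<le> s_mubar S
           \<and> (\<forall>t. 0 \<le> sv_load b t)
           \<and> (\<forall>t. 0 < sv_load b t \<longrightarrow>
                 t \<in> I \<and> sv_vnf b \<in> r_V (rs ! t) \<and> asg t (sv_vnf b) = sv_node b
                 \<and> rng_idx S e (Dfair S (rs ! t) (sv_vnf b)) = sv_rng b)
           \<and> (0 < sv_Lam I b \<longrightarrow>
                 0 < sv_cap b - s_theta S (sv_vnf b) * sv_Lam I b
                 \<and> 1 / (sv_cap b - s_theta S (sv_vnf b) * sv_Lam I b) \<le> Dtop S e (sv_rng b))"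
proof (intro conjI allI impI)
  note GF = Gs_facts[OF ok g]
  have ap: "0 < a" and ac: "thg g * a * Lg asg g \<le> ccg g" using frac_facts[OF ok g a] by auto
  show "sv_node b \<in> s_nodes S" unfolding b mkvm_def using GF by simp
  show "sv_cap b \<le> s_mubar S" unfolding b mkvm_def using ac by simp
  show "0 \<le> sv_load b t" for t
  proof -
    have "inG asg t g \<Longrightarrow> 0 \<le> r_lam (rs!t)"
      using rsI[of t] lmin_pos unfolding inG_def wf_req_def by force
    then show ?thesis unfolding b mkvm_def using ap by simp
  qed
  show "t \<in> I" "sv_vnf b \<in> r_V (rs ! t)" "asg t (sv_vnf b) = sv_node b"
       "rng_idx S e (Dfair S (rs ! t) (sv_vnf b)) = sv_rng b" if "0 < sv_load b t" for t
  proof -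
    have "inG asg t g" using that unfolding b mkvm_def by (auto split: if_splits)
    then show "t \<in> I" "sv_vnf b \<in> r_V (rs ! t)" "asg t (sv_vnf b) = sv_node b"
       "rng_idx S e (Dfair S (rs ! t) (sv_vnf b)) = sv_rng b"
      unfolding b mkvm_def inG_def jr_def by auto
  qed
  have Lm: "sv_Lam I b = a * Lg asg g" unfolding b by (rule Lam_mkvm)
  have cm: "sv_cap b - s_theta S (sv_vnf b) * sv_Lam I b = s_mubar S - ccg g"
    unfolding Lm unfolding b mkvm_def thg_def by (simp add: algebra_simps)
  show "0 < sv_cap b - s_theta S (sv_vnf b) * sv_Lam I b" using cm GF by simp
  have "sv_rng b = snd (snd g)" unfolding b mkvm_def by simp
  then show "1 / (sv_cap b - s_theta S (sv_vnf b) * sv_Lam I b) \<le> Dtop S e (sv_rng b)"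
    using cm by (simp add: Dtop_cc ccg_def)
qed

lemma N_valid:
  assumes ok: "asg_ok asg"
  shows "sha_valid S rs e I (asg, fulls asg @ lasts asg)"
  unfolding sha_valid_def Let_def fst_conv snd_conv
proof (rule conjI)
  show "\<forall>t\<in>I. \<forall>v\<in>r_V (rs ! t). asg t v \<in> s_nodes S \<and> feas_layer S (rs ! t) (s_layer S (asg t v))
           \<and> (\<Sum>b\<leftarrow>fulls asg @ lasts asg. if sv_vnf b = v then sv_load b t else 0) = r_lam (rs ! t)"
  proof (intro ballI conjI)
  fix t v assume t: "t \<in> I" and v: "v \<in> r_V (rs!t)"
  show "asg t v \<in> s_nodes S" "feas_layer S (rs ! t) (s_layer S (asg t v))"
    using ok t v unfolding asg_ok_def by auto
  define g0 where "g0 = (asg t v, v, jr S rs e t v)"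
  have g0: "g0 \<in> Gs asg" unfolding g0_def Gs_def using t v by force
  have F: "(if sv_vnf (mkvm asg g x) = v then sv_load (mkvm asg g x) t else 0)
      = (if g = g0 then x * r_lam (rs!t) else 0)" for g x
    by (cases g) (auto simp: mkvm_def inG_def g0_def t v)
  have "(\<Sum>b\<leftarrow>fulls asg @ lasts asg. if sv_vnf b = v then sv_load b t else 0)
     = (\<Sum>g\<in>Gs asg. real (kg asg g - 1) * (if g = g0 then fr asg g * r_lam (rs!t) else 0)
          + (if g = g0 then ls asg g * r_lam (rs!t) else 0))"
    unfolding sum_N F ..
  also have "\<dots> = (\<Sum>g\<in>Gs asg. if g = g0 then (real (kg asg g - 1) * fr asg g + ls asg g) * r_lam (rs!t) else 0)"
    by (rule sum.cong) (auto simp: algebra_simps)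
  also have "\<dots> = (real (kg asg g0 - 1) * fr asg g0 + ls asg g0) * r_lam (rs!t)"
    using finGs g0 by simp
  also have "\<dots> = r_lam (rs!t)" using frac_sum[OF ok g0] by simp
  finally show "(\<Sum>b\<leftarrow>fulls asg @ lasts asg. if sv_vnf b = v then sv_load b t else 0) = r_lam (rs!t)" .
  qed
next
  show "\<forall>b\<in>set (fulls asg @ lasts asg). sv_node b \<in> s_nodes S \<and> sv_cap b \<le> s_mubar S
           \<and> (\<forall>t. 0 \<le> sv_load b t)
           \<and> (\<forall>t. 0 < sv_load b t \<longrightarrow>
                 t \<in> I \<and> sv_vnf b \<in> r_V (rs ! t) \<and> asg t (sv_vnf b) = sv_node b
                 \<and> rng_idx S e (Dfair S (rs ! t) (sv_vnf b)) = sv_rng b)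
           \<and> (0 < sv_Lam I b \<longrightarrow>
                 0 < sv_cap b - s_theta S (sv_vnf b) * sv_Lam I b
                 \<and> 1 / (sv_cap b - s_theta S (sv_vnf b) * sv_Lam I b) \<le> Dtop S e (sv_rng b))"
  proof (rule ballI)
  fix b assume "b \<in> set (fulls asg @ lasts asg)"
  then obtain g where g: "g \<in> Gs asg" and a: "b = mkvm asg g (fr asg g) \<or> b = mkvm asg g (ls asg g)"
    using set_N by blast
  show "sv_node b \<in> s_nodes S \<and> sv_cap b \<le> s_mubar S
           \<and> (\<forall>t. 0 \<le> sv_load b t)
           \<and> (\<forall>t. 0 < sv_load b t \<longrightarrow>
                 t \<in> I \<and> sv_vnf b \<in> r_V (rs ! t) \<and> asg t (sv_vnf b) = sv_node b
                 \<and> rng_idx S e (Dfair S (rs ! t) (sv_vnf b)) = sv_rng b)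
           \<and> (0 < sv_Lam I b \<longrightarrow>
                 0 < sv_cap b - s_theta S (sv_vnf b) * sv_Lam I b
                 \<and> 1 / (sv_cap b - s_theta S (sv_vnf b) * sv_Lam I b) \<le> Dtop S e (sv_rng b))"
    using a
  proof
    assume "b = mkvm asg g (fr asg g)" then show ?thesis using mkvm_valid[OF ok g] by blast
  next
    assume "b = mkvm asg g (ls asg g)" then show ?thesis using mkvm_valid[OF ok g] by blast
  qed
  qed
qed

lemma cap_full:
  assumes ok: "asg_ok asg" and g: "g \<in> Gs asg"
  shows "sv_cap (mkvm asg g (fr asg g)) = s_mubar S"
  using Gs_facts[OF ok g] ccg_pos[of g] unfolding mkvm_def fr_def by (simp add: field_simps)

lemma N_canonical:
  assumes ok: "asg_ok asg"
  shows "sha_canonical S I (asg, fulls asg @ lasts asg)"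
  unfolding sha_canonical_def snd_conv
proof (intro allI impI)
  fix a c
  assume a: "a < length (fulls asg @ lasts asg)" and c: "c < length (fulls asg @ lasts asg)"
    and h: "a \<noteq> c \<and> sv_node ((fulls asg @ lasts asg) ! a) = sv_node ((fulls asg @ lasts asg) ! c) \<and>
       sv_vnf ((fulls asg @ lasts asg) ! a) = sv_vnf ((fulls asg @ lasts asg) ! c) \<and>
       sv_rng ((fulls asg @ lasts asg) ! a) = sv_rng ((fulls asg @ lasts asg) ! c) \<and>
       0 < sv_Lam I ((fulls asg @ lasts asg) ! a) \<and> 0 < sv_Lam I ((fulls asg @ lasts asg) ! c)"
  define nf where "nf = length (fulls asg)"
  have fullcap: "sv_cap ((fulls asg @ lasts asg) ! x) = s_mubar S" if x: "x < nf" for x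
  proof -
    have "(fulls asg @ lasts asg) ! x = fulls asg ! x" using x by (simp add: nth_append nf_def)
    moreover have "fulls asg ! x \<in> set (fulls asg)" using x by (simp add: nf_def)
    ultimately show ?thesis using set_fulls cap_full[OF ok] by force
  qed
  show "sv_cap ((fulls asg @ lasts asg) ! a) = s_mubar S \<or> sv_cap ((fulls asg @ lasts asg) ! c) = s_mubar S"
  proof (cases "a < nf \<or> c < nf")
    case True then show ?thesis using fullcap by blast
  next
    case False
    have lg: "length (lasts asg) = length (glist asg)" by (simp add: lasts_def)
    have ea: "(fulls asg @ lasts asg) ! a = mkvm asg (glist asg ! (a - nf)) (ls asg (glist asg ! (a - nf)))"
      and ec: "(fulls asg @ lasts asg) ! c = mkvm asg (glist asg ! (c - nf)) (ls asg (glist asg ! (c - nf)))"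
      using False a c lg by (auto simp: nth_append nf_def lasts_def)
    have ia: "a - nf < length (glist asg)" and ic: "c - nf < length (glist asg)" using False a c lg by (auto simp: nf_def)
    have "glist asg ! (a - nf) = glist asg ! (c - nf)"
      using h unfolding ea ec mkvm_def by (auto simp: prod_eq_iff)
    then have "a - nf = c - nf" using nth_eq_iff_index_eq[OF glist(2) ia ic] by simp
    then have "a = c" using False by arith
    then show ?thesis using h by simp
  qed
qed

lemma N_cost:
  assumes ok: "asg_ok asg"
  shows "sha_cost S I (asg, fulls asg @ lasts asg) = LB asg"
proof -
  have F: "(if 0 < sv_Lam I (mkvm asg g x) then s_kf S (s_layer S (sv_node (mkvm asg g x)))
        + s_kp S (s_layer S (sv_node (mkvm asg g x))) * sv_cap (mkvm asg g x) else 0)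
      = s_kf S (s_layer S (fst g)) + s_kp S (s_layer S (fst g)) * (thg g * x * Lg asg g + (s_mubar S - ccg g))"
    if g: "g \<in> Gs asg" and x: "x = fr asg g \<or> x = ls asg g" for g x
  proof -
    have "0 < sv_Lam I (mkvm asg g x)" unfolding Lam_mkvm
      using frac_facts(1)[OF ok g x] Gs_facts(1)[OF ok g] by simp
    then show ?thesis by (simp add: mkvm_def)
  qed
  have per: "real (kg asg g - 1) * (s_kf S (s_layer S (fst g)) + s_kp S (s_layer S (fst g)) * (thg g * fr asg g * Lg asg g + (s_mubar S - ccg g)))
      + (s_kf S (s_layer S (fst g)) + s_kp S (s_layer S (fst g)) * (thg g * ls asg g * Lg asg g + (s_mubar S - ccg g)))
      = LBg asg g" if g: "g \<in> Gs asg" for g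
  proof -
    have lse: "ls asg g = 1 - real (kg asg g - 1) * fr asg g" using frac_sum[OF ok g] by simp
    have rk: "real (kg asg g - 1) = real (kg asg g) - 1" using kg_facts(1)[OF ok g] by simp
    show ?thesis unfolding LBg_def lse rk by (simp add: algebra_simps)
  qed
  have "sha_cost S I (asg, fulls asg @ lasts asg)
    = (\<Sum>g\<in>Gs asg. real (kg asg g - 1) * (s_kf S (s_layer S (fst g)) + s_kp S (s_layer S (fst g)) * (thg g * fr asg g * Lg asg g + (s_mubar S - ccg g)))
      + (s_kf S (s_layer S (fst g)) + s_kp S (s_layer S (fst g)) * (thg g * ls asg g * Lg asg g + (s_mubar S - ccg g))))"
    unfolding sha_cost_def snd_conv sum_N using F by (intro sum.cong refl) auto
  also have "\<dots> = LB asg" unfolding LB_def using per by (intro sum.cong refl) auto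
  finally show ?thesis .
qed

end

context shactx begin

lemma valid_ok: "sha_valid S rs e I (asg, vms) \<Longrightarrow> asg_ok asg"
  unfolding sha_valid_def Let_def asg_ok_def by auto

lemma LB_lower:
  assumes V: "sha_valid S rs e I (asg, vms)"
  shows "LB asg \<le> sha_cost S I (asg, vms)"
proof -
  have ok: "asg_ok asg" using valid_ok[OF V] .
  note VV = V[unfolded sha_valid_def Let_def fst_conv snd_conv]
  have V1: "(\<Sum>b\<leftarrow>vms. if sv_vnf b = v then sv_load b t else 0) = r_lam (rs ! t)"
    if t: "t \<in> I" and v: "v \<in> r_V (rs!t)" for t v
    using bspec[OF bspec[OF conjunct1[OF VV] t] v] by simp
  have V2: "sv_node b \<in> s_nodes S \<and> sv_cap b \<le> s_mubar S
           \<and> (\<forall>t. 0 \<le> sv_load b t)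
           \<and> (\<forall>t. 0 < sv_load b t \<longrightarrow>
                 t \<in> I \<and> sv_vnf b \<in> r_V (rs ! t) \<and> asg t (sv_vnf b) = sv_node b
                 \<and> rng_idx S e (Dfair S (rs ! t) (sv_vnf b)) = sv_rng b)" if b: "b \<in> set vms" for b
  proof -
    note h = bspec[OF conjunct2[OF VV] b]
    show ?thesis using h by (elim conjE) (intro conjI)
  qed
  define n where "n = length vms"
  define B where "B a = vms ! a" for a
  define Lm where "Lm a = sv_Lam I (B a)" for a
  define U where "U = {a \<in> {..<n}. 0 < Lm a}"
  define lab where "lab a = (sv_node (B a), sv_vnf (B a), sv_rng (B a))" for a
  define lay where "lay a = s_layer S (sv_node (B a))" for a
  define hh where "hh a = s_kf S (lay a) + s_kp S (lay a) * (s_mubar S - cc S e (sv_rng (B a)))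
      + s_kp S (lay a) * s_theta S (sv_vnf (B a)) * Lm a" for a
  have Bin: "\<And>a. a < n \<Longrightarrow> B a \<in> set vms" unfolding B_def n_def by simp
  have ld0: "\<And>a t. a < n \<Longrightarrow> 0 \<le> sv_load (B a) t" using V2[OF Bin] by simp
  have kp0: "\<And>a. a < n \<Longrightarrow> 0 \<le> s_kp S (lay a)"
  proof -
    fix a assume a: "a < n"
    have nd: "sv_node (B a) \<in> s_nodes S" using V2[OF Bin[OF a]] by simp
    show "0 \<le> s_kp S (lay a)" using cost_pos[OF S layer_le_Lmax[OF S nd]] by (simp add: lay_def)
  qed
  have finU: "finite U" unfolding U_def by simp
  have "sha_cost S I (asg, vms) = (\<Sum>a<n. if 0 < Lm a then s_kf S (lay a) + s_kp S (lay a) * sv_cap (B a) else 0)"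
    unfolding sha_cost_def snd_conv sum_list_map_nth n_def B_def Lm_def lay_def ..
  also have "\<dots> = (\<Sum>a\<in>U. s_kf S (lay a) + s_kp S (lay a) * sv_cap (B a))"
    unfolding U_def by (rule sum.inter_filter[symmetric]) simp
  finally have c1: "sha_cost S I (asg, vms) = (\<Sum>a\<in>U. s_kf S (lay a) + s_kp S (lay a) * sv_cap (B a))" .
  have c2: "(\<Sum>a\<in>U. hh a) \<le> (\<Sum>a\<in>U. s_kf S (lay a) + s_kp S (lay a) * sv_cap (B a))"
  proof (rule sum_mono)
    fix a assume a: "a \<in> U"
    then have an: "a < n" and Lp: "0 < Lm a" unfolding U_def by auto
    have "s_theta S (sv_vnf (B a)) * Lm a + (s_mubar S - cc S e (sv_rng (B a))) \<le> sv_cap (B a)"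
      using sha_vm_cap(2)[OF S V, of "B a"] Bin[OF an] Lp unfolding Lm_def by simp
    then have "s_kp S (lay a) * (s_theta S (sv_vnf (B a)) * Lm a + (s_mubar S - cc S e (sv_rng (B a))))
        \<le> s_kp S (lay a) * sv_cap (B a)" using kp0[OF an] by (rule mult_left_mono)
    then show "hh a \<le> s_kf S (lay a) + s_kp S (lay a) * sv_cap (B a)"
      unfolding hh_def by (simp add: algebra_simps)
  qed
  have labG: "lab a \<in> Gs asg" and labI: "\<exists>t. t \<in> I \<and> inG asg t (lab a)" if a: "a \<in> U" for a
  proof -
    have an: "a < n" and Lp: "0 < Lm a" using a unfolding U_def by auto
    obtain t where t: "t \<in> I" and lt: "0 < sv_load (B a) t"
    proof -
      have "\<exists>t\<in>I. 0 < sv_load (B a) t"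
        using sum_pos_ex[OF finI, of "sv_load (B a)"] ld0[OF an] Lp unfolding Lm_def sv_Lam_def by simp
      then show ?thesis using that by blast
    qed
    then have h: "sv_vnf (B a) \<in> r_V (rs ! t) \<and> asg t (sv_vnf (B a)) = sv_node (B a)
                 \<and> rng_idx S e (Dfair S (rs ! t) (sv_vnf (B a))) = sv_rng (B a)"
      using V2[OF Bin[OF an]] by simp
    then have "lab a = (\<lambda>(t, v). (asg t v, v, jr S rs e t v)) (t, sv_vnf (B a))"
      unfolding lab_def jr_def by simp
    then show "lab a \<in> Gs asg" unfolding Gs_def using t h by blast
    show "\<exists>t. t \<in> I \<and> inG asg t (lab a)" using t h unfolding inG_def lab_def jr_def by auto
  qed
  define Ug where "Ug g = {a. a \<in> U \<and> lab a = g}" for g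
  have c3: "(\<Sum>a\<in>U. hh a) = (\<Sum>g\<in>Gs asg. \<Sum>a\<in>Ug g. hh a)"
    unfolding Ug_def by (rule sum.group[symmetric, OF finU finGs]) (use labG in blast)
  have loadsum: "(\<Sum>a\<in>Ug g. sv_load (B a) t) = (if inG asg t g then r_lam (rs!t) else 0)"
    if g: "g \<in> Gs asg" and t: "t \<in> I" for g t
  proof (cases "inG asg t g")
    case True
    define v where "v = fst (snd g)"
    have v: "v \<in> r_V (rs!t)" using True unfolding inG_def v_def by simp
    have "r_lam (rs!t) = (\<Sum>a<n. if sv_vnf (B a) = v then sv_load (B a) t else 0)"
      using V1[OF t v] unfolding sum_list_map_nth n_def B_def by simp
    also have "\<dots> = (\<Sum>a<n. if a \<in> Ug g then sv_load (B a) t else 0)"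
    proof (rule sum.cong[OF refl])
      fix a assume "a \<in> {..<n}"
      then have an: "a < n" by simp
      show "(if sv_vnf (B a) = v then sv_load (B a) t else 0) = (if a \<in> Ug g then sv_load (B a) t else 0)"
      proof (cases "a \<in> Ug g")
        case True
        then have "sv_vnf (B a) = v" unfolding Ug_def lab_def v_def by auto
        then show ?thesis using True by simp
      next
        case notin: False
        show ?thesis
        proof (cases "sv_vnf (B a) = v \<and> 0 < sv_load (B a) t")
          case True
          then have h: "asg t v = sv_node (B a) \<and> rng_idx S e (Dfair S (rs ! t) v) = sv_rng (B a)"
            using V2[OF Bin[OF an]] by auto
          have "sv_load (B a) t \<le> Lm a"
            unfolding Lm_def sv_Lam_def by (rule member_le_sum[OF t _ finI]) (use ld0[OF an] in simp)
          then have "a \<in> U" unfolding U_def using an True by simp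
          moreover have "lab a = g" using h \<open>inG asg t g\<close> True unfolding lab_def inG_def jr_def v_def
            by (simp add: prod_eq_iff)
          ultimately show ?thesis using notin unfolding Ug_def by simp
        next
          case False
          then show ?thesis using notin ld0[OF an, of t] by auto
        qed
      qed
    qed
    also have "\<dots> = (\<Sum>a\<in>Ug g. sv_load (B a) t)"
    proof -
      have "Ug g \<subseteq> {..<n}" unfolding Ug_def U_def by auto
      then have "{..<n} \<inter> Ug g = Ug g" by blast
      then show ?thesis using sum.inter_restrict[of "{..<n}" "\<lambda>a. sv_load (B a) t" "Ug g"] by simp
    qed
    finally show ?thesis using True by simp
  next
    case False
    have "sv_load (B a) t = 0" if a: "a \<in> Ug g" for a
    proof (rule ccontr)
      assume ne: "sv_load (B a) t \<noteq> 0"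
      have an: "a < n" and la: "lab a = g" using a unfolding Ug_def U_def by auto
      have "0 < sv_load (B a) t" using ne ld0[OF an, of t] by simp
      then have "sv_vnf (B a) \<in> r_V (rs ! t) \<and> asg t (sv_vnf (B a)) = sv_node (B a)
                 \<and> rng_idx S e (Dfair S (rs ! t) (sv_vnf (B a))) = sv_rng (B a)"
        using V2[OF Bin[OF an]] by simp
      then have "inG asg t g" using t la unfolding inG_def lab_def jr_def by auto
      then show False using False by simp
    qed
    then show ?thesis using False by simp
  qed
  have Lgsum: "(\<Sum>a\<in>Ug g. Lm a) = Lg asg g" if g: "g \<in> Gs asg" for g
  proof -
    have "(\<Sum>a\<in>Ug g. Lm a) = (\<Sum>t\<in>I. \<Sum>a\<in>Ug g. sv_load (B a) t)"
      unfolding Lm_def sv_Lam_def by (rule sum.swap)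
    also have "\<dots> = Lg asg g" unfolding Lg_def using loadsum[OF g] by (intro sum.cong refl) auto
    finally show ?thesis .
  qed
  have c4: "LBg asg g \<le> (\<Sum>a\<in>Ug g. hh a)" if g: "g \<in> Gs asg" for g
  proof -
    define K1 where "K1 = s_kf S (s_layer S (fst g)) + s_kp S (s_layer S (fst g)) * (s_mubar S - ccg g)"
    define K2 where "K2 = s_kp S (s_layer S (fst g)) * thg g"
    have finUg: "finite (Ug g)" unfolding Ug_def using finU by simp
    have hg: "hh a = K1 + K2 * Lm a" if a: "a \<in> Ug g" for a
    proof -
      have "lab a = g" using a unfolding Ug_def by simp
      then have "sv_node (B a) = fst g" "sv_vnf (B a) = fst (snd g)" "sv_rng (B a) = snd (snd g)"
        unfolding lab_def by auto
      then show ?thesis unfolding hh_def K1_def K2_def lay_def ccg_def thg_def by (simp add: algebra_simps)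
    qed
    have "(\<Sum>a\<in>Ug g. hh a) = (\<Sum>a\<in>Ug g. K1 + K2 * Lm a)" using hg by (rule sum.cong[OF refl])
    also have "\<dots> = real (card (Ug g)) * K1 + K2 * Lg asg g"
      by (simp add: sum.distrib sum_distrib_left[symmetric] Lgsum[OF g])
    finally have sh: "(\<Sum>a\<in>Ug g. hh a) = real (card (Ug g)) * K1 + K2 * Lg asg g" .
    have "thg g * Lg asg g = (\<Sum>a\<in>Ug g. thg g * Lm a)"
      by (simp add: sum_distrib_left[symmetric] Lgsum[OF g])
    also have "\<dots> \<le> (\<Sum>a\<in>Ug g. ccg g)"
    proof (rule sum_mono)
      fix a assume a: "a \<in> Ug g"
      then have an: "a < n" and Lp: "0 < Lm a" and la: "lab a = g" unfolding Ug_def U_def by auto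
      have "s_theta S (sv_vnf (B a)) * Lm a \<le> cc S e (sv_rng (B a))"
        using sha_vm_cap(3)[OF S V, of "B a"] Bin[OF an] Lp unfolding Lm_def by simp
      then show "thg g * Lm a \<le> ccg g" using la unfolding lab_def thg_def ccg_def by auto
    qed
    also have "\<dots> = real (card (Ug g)) * ccg g" by simp
    finally have "thg g * Lg asg g / ccg g \<le> real (card (Ug g))" using ccg_pos[of g] by (simp add: divide_simps)
    then have kc: "kg asg g \<le> card (Ug g)" unfolding kg_def by simp
    have K1p: "0 \<le> K1"
    proof -
      have nd: "fst g \<in> s_nodes S" using Gs_facts(4)[OF ok g] .
      have "0 < s_kf S (s_layer S (fst g))" "0 < s_kp S (s_layer S (fst g))"
        using cost_pos[OF S layer_le_Lmax[OF S nd]] by auto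
      then show ?thesis unfolding K1_def using Gs_facts(3)[OF ok g] by (simp add: add_nonneg_nonneg less_imp_le)
    qed
    have "real (kg asg g) * K1 \<le> real (card (Ug g)) * K1" using kc K1p by (intro mult_right_mono) auto
    then show ?thesis unfolding sh LBg_def K1_def[symmetric] K2_def by (simp add: algebra_simps)
  qed
  have "LB asg \<le> (\<Sum>g\<in>Gs asg. \<Sum>a\<in>Ug g. hh a)" unfolding LB_def using c4 by (rule sum_mono)
  then show ?thesis using c1 c2 c3 by linarith
qed

lemma LB_cong:
  assumes "\<And>t v. t \<in> I \<Longrightarrow> v \<in> r_V (rs!t) \<Longrightarrow> asg t v = asg' t v"
  shows "LB asg = LB asg'"
proof -
  have G: "Gs asg = Gs asg'" unfolding Gs_def using assms by (intro image_cong refl) auto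
  have iG: "inG asg t g = inG asg' t g" for t g unfolding inG_def using assms by auto
  have L: "Lg asg g = Lg asg' g" for g unfolding Lg_def iG ..
  have k: "kg asg g = kg asg' g" for g unfolding kg_def L ..
  show ?thesis unfolding LB_def LBg_def G L k ..
qed

end

context shactx begin

lemma sha_exists: "\<exists>P. sha_opt S rs e I P \<and> sha_canonical S I P"
proof -
  define Jobs where "Jobs = Sigma I (\<lambda>t. r_V (rs!t))"
  have finJ: "finite Jobs" unfolding Jobs_def using finI finV by auto
  define F where "F = {f \<in> Jobs \<rightarrow>\<^sub>E s_nodes S. \<forall>x\<in>Jobs. feas_layer S (rs!(fst x)) (s_layer S (f x))}"
  have finN: "finite (s_nodes S)" using S by (simp add: wf_sys_def)
  have finF: "finite F" unfolding F_def using finite_PiE[OF finJ, of "\<lambda>_. s_nodes S"] finN by simp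
  obtain i0 where i0: "i0 \<in> s_nodes S" "s_layer S i0 = 0" using S unfolding wf_sys_def by blast
  define toA where "toA f = (\<lambda>t v. f (t, v))" for f :: "nat \<times> 'v \<Rightarrow> 'n"
  have f0: "restrict (\<lambda>_. i0) Jobs \<in> F"
    unfolding F_def using i0 rsI unfolding Jobs_def by (auto simp: wf_req_def)
  have okF: "asg_ok (toA f)" if f: "f \<in> F" for f
    unfolding asg_ok_def toA_def
  proof (intro ballI conjI)
    fix t v assume t: "t \<in> I" and v: "v \<in> r_V (rs!t)"
    then have j: "(t, v) \<in> Jobs" unfolding Jobs_def by simp
    show "f (t, v) \<in> s_nodes S" using f j unfolding F_def by (auto simp: PiE_def Pi_def)
    show "feas_layer S (rs ! t) (s_layer S (f (t, v)))" using f j unfolding F_def by auto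
  qed
  define Vals where "Vals = (\<lambda>f. LB (toA f)) ` F"
  have finVals: "finite Vals" unfolding Vals_def using finF by simp
  have neVals: "Vals \<noteq> {}" unfolding Vals_def using f0 by blast
  obtain fs where fs: "fs \<in> F" and fsm: "LB (toA fs) = Min Vals"
    using Min_in[OF finVals neVals] unfolding Vals_def by auto
  define asg where "asg = toA fs"
  have ok: "asg_ok asg" unfolding asg_def using okF[OF fs] .
  define P where "P = (asg, fulls asg @ lasts asg)"
  have opt: "sha_opt S rs e I P"
    unfolding sha_opt_def
  proof (intro conjI allI impI)
    show "sha_valid S rs e I P" unfolding P_def by (rule N_valid[OF ok])
    fix P' assume V': "sha_valid S rs e I P'"
    obtain asg' vms' where P': "P' = (asg', vms')" by (cases P')
    have V'': "sha_valid S rs e I (asg', vms')" using V' P' by simp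
    have ok': "asg_ok asg'" using valid_ok[OF V''] .
    define f' where "f' = restrict (\<lambda>x. asg' (fst x) (snd x)) Jobs"
    have f'F: "f' \<in> F" unfolding F_def f'_def
      using ok' unfolding asg_ok_def Jobs_def by (auto simp: PiE_def Pi_def)
    have "LB (toA f') = LB asg'"
      by (rule LB_cong) (simp add: toA_def f'_def Jobs_def)
    moreover have "Min Vals \<le> LB (toA f')" unfolding Vals_def using finVals f'F Vals_def by auto
    moreover have "sha_cost S I P = LB asg" unfolding P_def by (rule N_cost[OF ok])
    ultimately show "sha_cost S I P \<le> sha_cost S I P'"
      using LB_lower[OF V''] fsm P' unfolding asg_def by simp
  qed
  have "sha_canonical S I P" unfolding P_def by (rule N_canonical[OF ok])
  then show ?thesis using opt by blast
qed

lemma phiSHA_props: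
  "sha_valid S rs e I (SOME P. sha_opt S rs e I P \<and> sha_canonical S I P)
   \<and> sha_canonical S I (SOME P. sha_opt S rs e I P \<and> sha_canonical S I P)"
proof -
  have "sha_opt S rs e I (SOME P. sha_opt S rs e I P \<and> sha_canonical S I P)
     \<and> sha_canonical S I (SOME P. sha_opt S rs e I P \<and> sha_canonical S I P)"
    using someI_ex[OF sha_exists] .
  then show ?thesis unfolding sha_opt_def by blast
qed

lemma phiSHA_bound:
  "(\<Sum>t\<in>I. \<Sum>v\<in>r_V (rs!t). kap S (lstar S (rs!t)) * s_theta S v * r_lam (rs!t) / cc S e (jr S rs e t v))
     \<le> phiSHA S rs e I + (\<Sum>i\<in>s_nodes S. \<Sum>v\<in>s_vnfs S. \<Sum>j\<in>Jset S e. kap S (s_layer S i))"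
  unfolding phiSHA_def
  by (rule sha_charge[OF S e finI]) (use rsI phiSHA_props in auto)

lemma phiSHA_nonneg: "0 \<le> phiSHA S rs e I"
proof -
  obtain asg vms where P: "(SOME P. sha_opt S rs e I P \<and> sha_canonical S I P) = (asg, vms)"
    by (cases "SOME P. sha_opt S rs e I P \<and> sha_canonical S I P")
  have V: "sha_valid S rs e I (asg, vms)" using phiSHA_props P by simp
  have "\<forall>b\<in>set vms. sv_node b \<in> s_nodes S"
    using V unfolding sha_valid_def Let_def by auto
  then have "0 \<le> (if 0 < sv_Lam I b \<and> sv_cap b = s_mubar S
      then s_kf S (s_layer S (sv_node b)) + s_kp S (s_layer S (sv_node b)) * sv_cap b else 0)"
    if b: "b \<in> set vms" for b
  proof -
    have nd: "sv_node b \<in> s_nodes S" using b \<open>\<forall>b\<in>set vms. sv_node b \<in> s_nodes S\<close> by simp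
    have "0 < s_kf S (s_layer S (sv_node b))" "0 < s_kp S (s_layer S (sv_node b))"
      using cost_pos[OF S layer_le_Lmax[OF S nd]] by auto
    moreover have "0 < s_mubar S" using S by (simp add: wf_sys_def)
    ultimately show ?thesis by (simp add: less_imp_le)
  qed
  then show ?thesis unfolding phiSHA_def P sha_fullcost_def snd_conv
    by (intro sum_list_nonneg) (simp only: set_map, blast)
qed

end

definition small :: "('n, 'v) sys \<Rightarrow> 'v req list \<Rightarrow> ('n, 'v) rvm \<Rightarrow> bool" where
  "small S rs b \<longleftrightarrow> 2 * s_theta S (rv_vnf b) * rv_Lam rs b \<le> s_lmin S * (1 + eps S (rv_int b)) ^ (rv_rng b)"

definition rlab :: "('n, 'v) rvm \<Rightarrow> 'n \<times> 'v \<times> nat \<times> nat" where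
  "rlab b = (rv_node b, rv_vnf b, rv_rng b, rv_int b)"

definition vm_ok :: "('n, 'v) sys \<Rightarrow> 'v req list \<Rightarrow> nat list \<Rightarrow> ('n, 'v) rvm \<Rightarrow> bool" where
  "vm_ok S rs ivl b \<longleftrightarrow> rv_jobs b \<noteq> [] \<and> 1 \<le> rv_int b \<and> rv_node b \<in> s_nodes S
     \<and> (\<forall>t\<in>set (rv_jobs b). t < length ivl \<and> ivl ! t = rv_int b \<and> t < length rs
         \<and> rv_vnf b \<in> r_V (rs!t) \<and> s_layer S (rv_node b) = lstar S (rs!t)
         \<and> rv_rng b = jr S rs (eps S (rv_int b)) t (rv_vnf b)
         \<and> s_theta S (rv_vnf b) * rv_Lam rs b + 1 / Dfair S (rs!t) (rv_vnf b) \<le> s_mubar S)"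

definition uniq :: "('n, 'v) sys \<Rightarrow> 'v req list \<Rightarrow> ('n, 'v) rvm list \<Rightarrow> bool" where
  "uniq S rs vms \<longleftrightarrow> (\<forall>a<length vms. \<forall>c<length vms. a \<noteq> c \<longrightarrow> rlab (vms!a) = rlab (vms!c)
      \<longrightarrow> small S rs (vms!a) \<longrightarrow> small S rs (vms!c) \<longrightarrow> False)"

definition jsum :: "'v req list \<Rightarrow> ('n, 'v) rvm list \<Rightarrow> (nat \<Rightarrow> 'v \<Rightarrow> real) \<Rightarrow> nat \<Rightarrow> real" where
  "jsum rs vms w h = (\<Sum>b\<leftarrow>vms. if rv_int b = h then (\<Sum>t\<leftarrow>rv_jobs b. w t (rv_vnf b)) else 0)"

lemma rv_Lam_app: "rv_Lam rs (b\<lparr>rv_jobs := rv_jobs b @ [t]\<rparr>) = rv_Lam rs b + r_lam (rs!t)"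
  by (simp add: rv_Lam_def)

lemma rv_Lam_nonneg:
  assumes S: "wf_sys S" and R: "\<forall>r\<in>set rs. wf_req S r" and h: "\<forall>t\<in>set (rv_jobs b). t < length rs"
  shows "0 \<le> rv_Lam rs b"
proof -
  have "\<forall>x\<in>set (map (\<lambda>t. r_lam (rs ! t)) (rv_jobs b)). 0 \<le> x"
  proof
    fix x assume "x \<in> set (map (\<lambda>t. r_lam (rs ! t)) (rv_jobs b))"
    then obtain t where t: "t \<in> set (rv_jobs b)" and x: "x = r_lam (rs!t)" by auto
    have "wf_req S (rs!t)" using R h t by simp
    then have "s_lmin S \<le> x" unfolding x wf_req_def by simp
    then show "0 \<le> x" using S unfolding wf_sys_def by linarith
  qed
  then show ?thesis unfolding rv_Lam_def by (intro sum_list_nonneg) blast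
qed

lemma vm_ok_ivl: "vm_ok S rs ivl b \<Longrightarrow> vm_ok S rs (ivl @ [q]) b"
  unfolding vm_ok_def by (auto simp: nth_append)

lemma vm_job_range:
  assumes S: "wf_sys S" and R: "\<forall>r\<in>set rs. wf_req S r" and ok: "vm_ok S rs ivl b" and t: "t \<in> set (rv_jobs b)"
  shows "in_range S (eps S (rv_int b)) (rv_rng b) (Dfair S (rs!t) (rv_vnf b))"
    and "0 < Dfair S (rs!t) (rv_vnf b)"
proof -
  have h: "t < length rs" "rv_vnf b \<in> r_V (rs!t)" "1 \<le> rv_int b"
    "rv_rng b = jr S rs (eps S (rv_int b)) t (rv_vnf b)" using ok t unfolding vm_ok_def by auto
  have r: "wf_req S (rs!t)" using R h(1) by simp
  show "in_range S (eps S (rv_int b)) (rv_rng b) (Dfair S (rs!t) (rv_vnf b))"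
    using job_range[OF S r h(2) h(3)] h(4) unfolding jr_def by simp
  show "0 < Dfair S (rs!t) (rv_vnf b)" using Dfair_ge(2)[OF S r h(2)] .
qed

lemma inv_lt: "0 < x \<Longrightarrow> 0 < (D::real) \<Longrightarrow> D < 1/x \<Longrightarrow> x < 1/D"
  by (simp add: field_simps)

lemma nonviable_big:
  assumes S: "wf_sys S" and R: "\<forall>r\<in>set rs. wf_req S r" and ok: "vm_ok S rs ivl b"
    and bi: "rv_int b = q" "rv_node b = i" "rv_vnf b = v" "rv_rng b = rng_idx S e (Dfair S (rs!t0) v)"
    and ee: "e = eps S q" and q1: "1 \<le> q" and t0: "t0 < length rs" and v: "v \<in> r_V (rs!t0)"
    and nv: "\<not> viable S rs q e t0 i v b"
  shows "s_lmin S * (1+e)^(rv_rng b) < s_theta S v * (rv_Lam rs b + r_lam (rs!t0))"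
proof -
  define x where "x = s_mubar S - s_theta S v * (rv_Lam rs b + r_lam (rs!t0))"
  define A where "A = s_lmin S * (1+e)^(rv_rng b)"
  have r0: "wf_req S (rs!t0)" using R t0 by simp
  have l: "0 < s_lmin S" using S by (simp add: wf_sys_def)
  have ep: "0 < e" using eps_pos[OF S] ee by simp
  have D0p: "0 < Dfair S (rs!t0) v" using Dfair_ge(2)[OF S r0 v] .
  have ir0: "in_range S e (rv_rng b) (Dfair S (rs!t0) v)"
    using job_range[OF S r0 v q1] bi(4) ee by simp
  have A0: "A \<le> s_mubar S - 1 / Dfair S (rs!t0) v" unfolding A_def using inr_facts(2)[OF D0p ir0 l ep] .
  have Aj: "A \<le> s_mubar S - 1 / Dfair S (rs!t') v" if t': "t' \<in> set (rv_jobs b)" for t'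
  proof -
    have "in_range S e (rv_rng b) (Dfair S (rs!t') v)" "0 < Dfair S (rs!t') v"
      using vm_job_range[OF S R ok t'] bi(1,3) ee by auto
    then show ?thesis unfolding A_def using inr_facts(2)[OF _ _ l ep] by blast
  qed
  have "\<not> (0 < x \<and> 1 / x \<le> Dfair S (rs!t0) v \<and> (\<forall>t'\<in>set (rv_jobs b). 1 / x \<le> Dfair S (rs ! t') v))"
    using nv bi unfolding viable_def Let_def x_def by auto
  then consider "x \<le> 0" | "0 < x" "Dfair S (rs!t0) v < 1 / x"
    | t' where "0 < x" "t' \<in> set (rv_jobs b)" "Dfair S (rs!t') v < 1 / x" by force
  then have "A < s_mubar S - x"
  proof cases
    case 1
    have "0 < 1 / Dfair S (rs!t0) v" using D0p by simp
    then show ?thesis using 1 A0 by linarith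
  next
    case 2
    have "x < 1 / Dfair S (rs!t0) v" using inv_lt[OF 2(1) D0p 2(2)] .
    then show ?thesis using A0 by linarith
  next
    case 3
    have Dp: "0 < Dfair S (rs!t') v" using vm_job_range(2)[OF S R ok 3(2)] bi(3) by simp
    have "x < 1 / Dfair S (rs!t') v" using inv_lt[OF 3(1) Dp 3(3)] .
    then show ?thesis using Aj[OF 3(2)] by linarith
  qed
  then show ?thesis unfolding x_def A_def by simp
qed

lemma sum_list_upd_real: "k < length xs \<Longrightarrow> sum_list (xs[k := x]) = sum_list xs + x - xs ! k" for xs :: "real list"
proof (induction xs arbitrary: k)
  case Nil then show ?case by simp
next
  case (Cons a xs)
  show ?case
  proof (cases k)
    case 0 then show ?thesis by simp
  next
    case (Suc m)
    then have m: "m < length xs" using Cons.prems by simp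
    have "sum_list ((a # xs)[k := x]) = a + sum_list (xs[m := x])" using Suc by simp
    also have "\<dots> = a + (sum_list xs + x - xs ! m)" using Cons.IH[OF m] by simp
    finally show ?thesis using Suc by simp
  qed
qed

lemma uniq_mono:
  assumes u: "uniq S rs vms" and l: "length vms' = length vms"
    and h: "\<And>a. a < length vms \<Longrightarrow> rlab (vms'!a) = rlab (vms!a) \<and> (small S rs (vms'!a) \<longrightarrow> small S rs (vms!a))"
  shows "uniq S rs vms'"
  unfolding uniq_def
proof (intro allI impI)
  fix a c assume a: "a < length vms'" and c: "c < length vms'" and ne: "a \<noteq> c"
    and lab: "rlab (vms'!a) = rlab (vms'!c)" and sa: "small S rs (vms'!a)" and sc: "small S rs (vms'!c)"
  have a': "a < length vms" and c': "c < length vms" using a c l by auto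
  have h1: "rlab (vms!a) = rlab (vms!c)" using h[OF a'] h[OF c'] lab by simp
  have h2: "small S rs (vms!a)" using h[OF a'] sa by simp
  have h3: "small S rs (vms!c)" using h[OF c'] sc by simp
  show False using u[unfolded uniq_def, rule_format, OF a' c' ne h1 h2 h3] .
qed

lemma place1_inv:
  assumes S: "wf_sys S" and R: "\<forall>r\<in>set rs. wf_req S r" and t0: "t0 < length rs"
    and ti: "t0 < length ivl" and iq: "ivl ! t0 = q" and q1: "1 \<le> q" and ee: "e = eps S q"
    and v: "v \<in> r_V (rs!t0)" and i: "i \<in> s_nodes S" and li: "s_layer S i = lstar S (rs!t0)"
    and ok: "\<forall>b\<in>set vms. vm_ok S rs ivl b" and u: "uniq S rs vms"
    and p: "place1 S rs q e t0 i v vms vms'"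
  shows "(\<forall>b\<in>set vms'. vm_ok S rs ivl b) \<and> uniq S rs vms'
    \<and> (\<forall>w h. jsum rs vms' w h = jsum rs vms w h + (if h = q then w t0 v else 0))"
proof -
  have r0: "wf_req S (rs!t0)" using R t0 by simp
  have D0p: "0 < Dfair S (rs!t0) v" using Dfair_ge(2)[OF S r0 v] .
  have th0: "0 \<le> s_theta S v" using vnfs_theta[OF S req_vnf[OF r0 v]] by simp
  have lam0: "0 \<le> r_lam (rs!t0)" using r0 S unfolding wf_req_def wf_sys_def by linarith
  from p consider
      k where "k < length vms" "viable S rs q e t0 i v (vms ! k)"
        "vms' = vms[k := (vms ! k)\<lparr>rv_jobs := rv_jobs (vms ! k) @ [t0]\<rparr>]"
    | "\<forall>k < length vms. \<not> viable S rs q e t0 i v (vms ! k)"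
        "vms' = vms @ [\<lparr>rv_node = i, rv_vnf = v, rv_rng = rng_idx S e (Dfair S (rs ! t0) v),
                         rv_int = q, rv_jobs = [t0]\<rparr>]"
    unfolding place1_def by blast
  then show ?thesis
  proof cases
    case 1
    define b where "b = vms ! k"
    define b' where "b' = b\<lparr>rv_jobs := rv_jobs b @ [t0]\<rparr>"
    have bin: "b \<in> set vms" unfolding b_def using 1 by simp
    have okb: "vm_ok S rs ivl b" using ok bin by simp
    define x where "x = s_mubar S - s_theta S v * (rv_Lam rs b + r_lam (rs!t0))"
    have via: "rv_node b = i" "rv_vnf b = v" "rv_int b = q" "rv_rng b = rng_idx S e (Dfair S (rs!t0) v)"
      "0 < x" "1 / x \<le> Dfair S (rs!t0) v" "\<forall>t'\<in>set (rv_jobs b). 1 / x \<le> Dfair S (rs ! t') v"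
      using 1(2) unfolding viable_def Let_def b_def[symmetric] x_def by auto
    have L': "rv_Lam rs b' = rv_Lam rs b + r_lam (rs!t0)" unfolding b'_def by (rule rv_Lam_app)
    have capok: "s_theta S v * rv_Lam rs b' + 1 / Dfair S (rs!t') v \<le> s_mubar S"
      if "1 / x \<le> Dfair S (rs!t') v" and "0 < Dfair S (rs!t') v" for t'
    proof -
      have "1 / Dfair S (rs!t') v \<le> x" using inv_le_rev[of "1 / x" "1 / Dfair S (rs!t') v"] that via(5)
        by (simp add: divide_simps mult.commute)
      then show ?thesis unfolding L' x_def by simp
    qed
    have okb': "vm_ok S rs ivl b'"
      unfolding vm_ok_def
    proof (intro conjI)
      show "rv_jobs b' \<noteq> []" unfolding b'_def by simp
      show "1 \<le> rv_int b'" "rv_node b' \<in> s_nodes S" using okb unfolding b'_def vm_ok_def by auto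
      show "\<forall>t\<in>set (rv_jobs b'). t < length ivl \<and> ivl ! t = rv_int b' \<and> t < length rs
         \<and> rv_vnf b' \<in> r_V (rs!t) \<and> s_layer S (rv_node b') = lstar S (rs!t)
         \<and> rv_rng b' = jr S rs (eps S (rv_int b')) t (rv_vnf b')
         \<and> s_theta S (rv_vnf b') * rv_Lam rs b' + 1 / Dfair S (rs!t) (rv_vnf b') \<le> s_mubar S"
      proof (rule ballI)
      fix t assume t: "t \<in> set (rv_jobs b')"
      then have "t \<in> set (rv_jobs b) \<or> t = t0" unfolding b'_def by auto
      then show "t < length ivl \<and> ivl ! t = rv_int b' \<and> t < length rs
         \<and> rv_vnf b' \<in> r_V (rs!t) \<and> s_layer S (rv_node b') = lstar S (rs!t)
         \<and> rv_rng b' = jr S rs (eps S (rv_int b')) t (rv_vnf b')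
         \<and> s_theta S (rv_vnf b') * rv_Lam rs b' + 1 / Dfair S (rs!t) (rv_vnf b') \<le> s_mubar S"
      proof
        assume tj: "t \<in> set (rv_jobs b)"
        have "0 < Dfair S (rs!t) v" using vm_job_range(2)[OF S R okb tj] via(2) by simp
        then have "s_theta S v * rv_Lam rs b' + 1 / Dfair S (rs!t) v \<le> s_mubar S"
          using capok via(7) tj by blast
        then show ?thesis using okb tj via(2) unfolding vm_ok_def b'_def by auto
      next
        assume tt: "t = t0"
        have "s_theta S v * rv_Lam rs b' + 1 / Dfair S (rs!t0) v \<le> s_mubar S"
          using capok via(6) D0p by blast
        then show ?thesis using tt ti iq t0 v li via ee unfolding b'_def jr_def by auto
      qed
      qed
    qed
    have ok': "\<forall>b\<in>set vms'. vm_ok S rs ivl b"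
      using 1(3) set_update_subset_insert[of vms k b'] ok okb' unfolding b_def[symmetric] b'_def[symmetric]
      by blast
    have u': "uniq S rs vms'"
    proof (rule uniq_mono[OF u])
      show "length vms' = length vms" using 1(3) by simp
      fix a assume a: "a < length vms"
      show "rlab (vms'!a) = rlab (vms!a) \<and> (small S rs (vms'!a) \<longrightarrow> small S rs (vms!a))"
      proof (cases "a = k")
        case True
        have "rv_Lam rs b \<le> rv_Lam rs b'" using L' lam0 by simp
        then have "s_theta S v * rv_Lam rs b \<le> s_theta S v * rv_Lam rs b'" using th0 by (rule mult_left_mono)
        then have "small S rs b' \<longrightarrow> small S rs b" unfolding small_def using via(2)
          by (simp add: b'_def)
        moreover have "vms' ! a = b'" using True 1(3) a unfolding b'_def b_def by simp
        moreover have "vms ! a = b" using True unfolding b_def by simp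
        ultimately show ?thesis by (simp add: rlab_def b'_def)
      next
        case False then show ?thesis using 1(3) by simp
      qed
    qed
    have js: "jsum rs vms' w h = jsum rs vms w h + (if h = q then w t0 v else 0)" for w h
    proof -
      define f where "f b = (if rv_int b = h then (\<Sum>t\<leftarrow>rv_jobs b. w t (rv_vnf b)) else 0)" for b :: "('a, 'b) rvm"
      have "jsum rs vms' w h = sum_list ((map f vms)[k := f b'])"
        unfolding jsum_def 1(3) b_def[symmetric] b'_def[symmetric] f_def by (simp add: map_update)
      also have "\<dots> = sum_list (map f vms) + f b' - f b"
        using sum_list_upd_real[of k "map f vms" "f b'"] 1(1) unfolding b_def by simp
      finally have e1: "jsum rs vms' w h = sum_list (map f vms) + f b' - f b" .
      have e2: "f b' - f b = (if h = q then w t0 v else 0)"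
        unfolding f_def b'_def using via(2,3) by auto
      have e3: "jsum rs vms w h = sum_list (map f vms)" unfolding jsum_def f_def ..
      show ?thesis using e1 e2 e3 by linarith
    qed
    show ?thesis using ok' u' js by blast
  next
    case 2
    define nb where "nb = \<lparr>rv_node = i, rv_vnf = v, rv_rng = rng_idx S e (Dfair S (rs ! t0) v),
                         rv_int = q, rv_jobs = [t0]\<rparr>"
    have Lnb: "rv_Lam rs nb = r_lam (rs!t0)" unfolding nb_def rv_Lam_def by simp
    have oknb: "vm_ok S rs ivl nb"
      unfolding vm_ok_def using q1 i ti iq t0 v li Dfair_ge(3)[OF S r0 v] Lnb ee
      by (auto simp: nb_def jr_def)
    have ok': "\<forall>b\<in>set vms'. vm_ok S rs ivl b" using 2(2) ok oknb unfolding nb_def[symmetric] by auto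
    have cross: False if c: "c < length vms" and lab: "rlab nb = rlab (vms!c)"
      and sn: "small S rs nb" and sc: "small S rs (vms!c)" for c
    proof -
      have okc: "vm_ok S rs ivl (vms!c)" using ok c by simp
      have bi: "rv_int (vms!c) = q" "rv_node (vms!c) = i" "rv_vnf (vms!c) = v"
        "rv_rng (vms!c) = rng_idx S e (Dfair S (rs!t0) v)" using lab unfolding rlab_def nb_def by auto
      have big: "s_lmin S * (1+e)^(rv_rng (vms!c)) < s_theta S v * (rv_Lam rs (vms!c) + r_lam (rs!t0))"
        using nonviable_big[OF S R okc bi ee q1 t0 v] 2(1) c by blast
      have "2 * s_theta S v * r_lam (rs!t0) \<le> s_lmin S * (1+e)^(rv_rng (vms!c))"
        using sn Lnb bi(4) ee unfolding small_def nb_def by simp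
      moreover have "2 * s_theta S v * rv_Lam rs (vms!c) \<le> s_lmin S * (1+e)^(rv_rng (vms!c))"
        using sc bi ee unfolding small_def by simp
      ultimately show False using big by (simp add: algebra_simps)
    qed
    have u': "uniq S rs vms'"
      unfolding uniq_def
    proof (intro allI impI)
      fix a c assume a: "a < length vms'" and c: "c < length vms'" and ne: "a \<noteq> c"
        and lab: "rlab (vms'!a) = rlab (vms'!c)" and sa: "small S rs (vms'!a)" and sc: "small S rs (vms'!c)"
      have lv: "length vms' = length vms + 1" using 2(2) by simp
      have nth': "vms' ! x = (if x < length vms then vms ! x else nb)" if "x < length vms'" for x
        using that lv 2(2) unfolding nb_def[symmetric] by (auto simp: nth_append)
      consider "a < length vms" "c < length vms" | "a = length vms" "c < length vms"
        | "a < length vms" "c = length vms" | "a = length vms" "c = length vms"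
        using a c lv by linarith
      then show False
      proof cases
        case 1
        have ea: "vms' ! a = vms ! a" and ec: "vms' ! c = vms ! c" using nth'[OF a] nth'[OF c] 1 by auto
        show False using u[unfolded uniq_def, rule_format, OF 1 ne] lab sa sc unfolding ea ec by blast
      next
        case 2 then show False using cross[of c] lab sa sc nth'[OF a] nth'[OF c] by auto
      next
        case 3 then show False using cross[of a] lab sa sc nth'[OF a] nth'[OF c] by auto
      next
        case 4 then show False using ne by simp
      qed
    qed
    have js: "jsum rs vms' w h = jsum rs vms w h + (if h = q then w t0 v else 0)" for w h
      unfolding jsum_def 2(2) by (simp add: nb_def)
    show ?thesis using ok' u' js by blast
  qed
qed

lemma place_all_inv:
  assumes pa: "place_all S rs q e t0 i vs vms vms2"
    and S: "wf_sys S" and R: "\<forall>r\<in>set rs. wf_req S r" and t0: "t0 < length rs"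
    and ti: "t0 < length ivl" and iq: "ivl ! t0 = q" and q1: "1 \<le> q" and ee: "e = eps S q"
    and vs: "set vs \<subseteq> r_V (rs!t0)" and i: "i \<in> s_nodes S" and li: "s_layer S i = lstar S (rs!t0)"
    and ok: "\<forall>b\<in>set vms. vm_ok S rs ivl b" and u: "uniq S rs vms"
  shows "(\<forall>b\<in>set vms2. vm_ok S rs ivl b) \<and> uniq S rs vms2
    \<and> (\<forall>w h. jsum rs vms2 w h = jsum rs vms w h + (if h = q then (\<Sum>v\<leftarrow>vs. w t0 v) else 0))"
  using pa vs ok u
proof (induction rule: place_all.induct)
  case (1 vms)
  then show ?case by simp
next
  case (2 v vms vms1 vs vms2)
  have v: "v \<in> r_V (rs!t0)" using 2(4) by simp
  have p1: "(\<forall>b\<in>set vms1. vm_ok S rs ivl b) \<and> uniq S rs vms1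
    \<and> (\<forall>w h. jsum rs vms1 w h = jsum rs vms w h + (if h = q then w t0 v else 0))"
    using place1_inv[OF S R t0 ti iq q1 ee v i li 2(5) 2(6) 2(1)] .
  have ih: "(\<forall>b\<in>set vms2. vm_ok S rs ivl b) \<and> uniq S rs vms2
    \<and> (\<forall>w h. jsum rs vms2 w h = jsum rs vms1 w h + (if h = q then (\<Sum>v\<leftarrow>vs. w t0 v) else 0))"
    using 2(3) 2(4) p1 by auto
  show ?case using p1 ih by auto
qed

definition rinv :: "('n, 'v) sys \<Rightarrow> 'v req list \<Rightarrow> ('n, 'v) rstate \<Rightarrow> bool" where
  "rinv S rs st \<longleftrightarrow> length (st_ivl st) \<le> length rs
    \<and> (\<forall>b\<in>set (st_vms st). vm_ok S rs (st_ivl st) b) \<and> uniq S rs (st_vms st)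
    \<and> (\<forall>w h. jsum rs (st_vms st) w h = (\<Sum>t\<in>sigma_set (st_ivl st) h. \<Sum>v\<in>r_V (rs!t). w t v))
    \<and> (\<forall>h. 1 \<le> h \<and> h \<le> length (st_Y st) \<longrightarrow>
         st_Y st ! (h-1) = phiSHA S rs (eps S h) (sigma_set (st_ivl st) h)
         \<and> Cq S h \<le> st_Y st ! (h-1) \<and> Sq S (st_Y st) h \<le> st_Y st ! (h-1))"

lemma sigma_app: "sigma_set (ivl @ [q]) h = (if h = q then insert (length ivl) (sigma_set ivl h) else sigma_set ivl h)"
  unfolding sigma_set_def by (auto simp: nth_append less_Suc_eq)

lemma sigma_fin: "finite (sigma_set ivl h)"
  unfolding sigma_set_def by simp

lemma sigma_lt: "t \<in> sigma_set ivl h \<Longrightarrow> t < length ivl"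
  unfolding sigma_set_def by simp

lemma Sq_app: "h \<le> length Ys + 1 \<Longrightarrow> Sq S (Ys @ [Y]) h = Sq S Ys h"
  unfolding Sq_def by (intro arg_cong2[where f = "(*)"] refl sum.cong) (auto simp: nth_append)

lemma rinv_init: "rinv S rs \<lparr>st_vms = [], st_ivl = [], st_Y = []\<rparr>"
  unfolding rinv_def uniq_def jsum_def sigma_set_def by simp

lemma rinv_step:
  assumes S: "wf_sys S" and R: "\<forall>r\<in>set rs. wf_req S r" and inv: "rinv S rs st" and st: "step S rs st st'"
  shows "rinv S rs st'"
proof -
  define ivl where "ivl = st_ivl st"
  define Ys where "Ys = st_Y st"
  define vms where "vms = st_vms st"
  define t0 where "t0 = length ivl"
  define q where "q = length Ys + 1"
  define e where "e = eps S q"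
  define ivl' where "ivl' = ivl @ [q]"
  define Y where "Y = phiSHA S rs e (sigma_set ivl' q)"
  have t0: "t0 < length rs" and ex: "\<exists>i vs. i \<in> s_nodes S \<and> s_layer S i = lstar S (rs!t0) \<and> distinct vs \<and> set vs = r_V (rs!t0)
              \<and> place_all S rs q e t0 i vs vms (st_vms st')"
    and iv': "st_ivl st' = ivl'"
    and Y': "st_Y st' = (if max (Cq S q) (Sq S Ys q) \<le> Y then Ys @ [Y] else Ys)"
    using st unfolding step_def Let_def ivl_def Ys_def vms_def t0_def q_def e_def ivl'_def Y_def by auto
  obtain i vs where i: "i \<in> s_nodes S" and li: "s_layer S i = lstar S (rs!t0)" and dvs: "distinct vs"
    and svs: "set vs = r_V (rs!t0)" and pa: "place_all S rs q e t0 i vs vms (st_vms st')"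
    using ex by blast
  have I0: "length ivl \<le> length rs" "\<forall>b\<in>set vms. vm_ok S rs ivl b" "uniq S rs vms"
    "\<forall>w h. jsum rs vms w h = (\<Sum>t\<in>sigma_set ivl h. \<Sum>v\<in>r_V (rs!t). w t v)"
    "\<forall>h. 1 \<le> h \<and> h \<le> length Ys \<longrightarrow>
         Ys ! (h-1) = phiSHA S rs (eps S h) (sigma_set ivl h)
         \<and> Cq S h \<le> Ys ! (h-1) \<and> Sq S Ys h \<le> Ys ! (h-1)"
    using inv unfolding rinv_def ivl_def Ys_def vms_def by auto
  have ok': "\<forall>b\<in>set vms. vm_ok S rs ivl' b" using I0(2) vm_ok_ivl unfolding ivl'_def by blast
  have ti: "t0 < length ivl'" and iq: "ivl' ! t0 = q" unfolding ivl'_def t0_def by auto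
  have q1: "1 \<le> q" unfolding q_def by simp
  have PA: "(\<forall>b\<in>set (st_vms st'). vm_ok S rs ivl' b) \<and> uniq S rs (st_vms st')
    \<and> (\<forall>w h. jsum rs (st_vms st') w h = jsum rs vms w h + (if h = q then (\<Sum>v\<leftarrow>vs. w t0 v) else 0))"
    using place_all_inv[OF pa S R t0 ti iq q1 e_def _ i li ok' I0(3)] svs by simp
  have js: "jsum rs (st_vms st') w h = (\<Sum>t\<in>sigma_set ivl' h. \<Sum>v\<in>r_V (rs!t). w t v)" for w h
  proof -
    have nin: "t0 \<notin> sigma_set ivl h" using sigma_lt unfolding t0_def by blast
    have "(\<Sum>v\<leftarrow>vs. w t0 v) = (\<Sum>v\<in>r_V (rs!t0). w t0 v)"
      using sum_list_distinct_conv_sum_set[OF dvs] svs by simp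
    then show ?thesis using PA I0(4) nin sigma_fin[of ivl h]
      unfolding ivl'_def sigma_app t0_def[symmetric] by auto
  qed
  have Yc: "1 \<le> h \<and> h \<le> length (st_Y st') \<longrightarrow>
         st_Y st' ! (h-1) = phiSHA S rs (eps S h) (sigma_set ivl' h)
         \<and> Cq S h \<le> st_Y st' ! (h-1) \<and> Sq S (st_Y st') h \<le> st_Y st' ! (h-1)" for h
  proof (cases "max (Cq S q) (Sq S Ys q) \<le> Y")
    case True
    then have Ye: "st_Y st' = Ys @ [Y]" using Y' by simp
    show ?thesis
    proof (intro impI)
      assume h: "1 \<le> h \<and> h \<le> length (st_Y st')"
      show "st_Y st' ! (h-1) = phiSHA S rs (eps S h) (sigma_set ivl' h)
         \<and> Cq S h \<le> st_Y st' ! (h-1) \<and> Sq S (st_Y st') h \<le> st_Y st' ! (h-1)"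
      proof (cases "h = q")
        case True
        have "st_Y st' ! (h-1) = Y" using Ye True unfolding q_def by simp
        moreover have "Sq S (st_Y st') h = Sq S Ys q" using Ye True Sq_app[of q Ys S Y] unfolding q_def by simp
        ultimately show ?thesis using \<open>max (Cq S q) (Sq S Ys q) \<le> Y\<close> True unfolding Y_def e_def by simp
      next
        case False
        then have hl: "h \<le> length Ys" using h Ye unfolding q_def by simp
        have "h - 1 < length Ys" using hl h by linarith
        then have "st_Y st' ! (h-1) = Ys ! (h-1)" using Ye by (simp add: nth_append)
        moreover have "Sq S (st_Y st') h = Sq S Ys h" using Ye hl Sq_app[of h Ys S Y] by simp
        moreover have "sigma_set ivl' h = sigma_set ivl h" unfolding ivl'_def sigma_app using False by simp
        moreover have "Ys ! (h-1) = phiSHA S rs (eps S h) (sigma_set ivl h)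
         \<and> Cq S h \<le> Ys ! (h-1) \<and> Sq S Ys h \<le> Ys ! (h-1)" using I0(5) h hl by blast
        ultimately show ?thesis by simp
      qed
    qed
  next
    case False
    then have Ye: "st_Y st' = Ys" using Y' by simp
    show ?thesis
    proof (intro impI)
      assume h: "1 \<le> h \<and> h \<le> length (st_Y st')"
      then have hl: "h \<le> length Ys" "h \<noteq> q" using Ye unfolding q_def by auto
      have ss: "sigma_set ivl' h = sigma_set ivl h" unfolding ivl'_def sigma_app using hl by simp
      have "Ys ! (h-1) = phiSHA S rs (eps S h) (sigma_set ivl h)
         \<and> Cq S h \<le> Ys ! (h-1) \<and> Sq S Ys h \<le> Ys ! (h-1)" using I0(5) h hl by blast
      then show "st_Y st' ! (h-1) = phiSHA S rs (eps S h) (sigma_set ivl' h)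
         \<and> Cq S h \<le> st_Y st' ! (h-1) \<and> Sq S (st_Y st') h \<le> st_Y st' ! (h-1)"
        using ss Ye by simp
    qed
  qed
  have len: "length ivl' \<le> length rs" using t0 unfolding ivl'_def t0_def by simp
  show ?thesis unfolding rinv_def iv' using len PA js Yc by blast
qed

lemma rinv_reach:
  assumes S: "wf_sys S" and R: "\<forall>r\<in>set rs. wf_req S r" and rch: "reach S rs st"
  shows "rinv S rs st"
  using rch
proof (induction rule: reach.induct)
  case 1 then show ?case by (rule rinv_init)
next
  case (2 st st') then show ?case using rinv_step[OF S R] by blast
qed

lemma shactx_interval:
  assumes S: "wf_sys S" and R: "\<forall>r\<in>set rs. wf_req S r" and inv: "rinv S rs st" and h: "1 \<le> h"
  shows "shactx S rs (eps S h) (sigma_set (st_ivl st) h)"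
proof
  have len: "length (st_ivl st) \<le> length rs" using inv unfolding rinv_def by simp
  show "wf_sys S" by (rule S)
  show "0 < eps S h" by (rule eps_pos[OF S])
  show "finite (sigma_set (st_ivl st) h)" by (rule sigma_fin)
  fix t assume t: "t \<in> sigma_set (st_ivl st) h"
  then have tl: "t < length rs" using sigma_lt[OF t] len by simp
  then show r: "wf_req S (rs ! t)" using R by simp
  fix v assume v: "v \<in> r_V (rs ! t)"
  show "in_range S (eps S h) (jr S rs (eps S h) t v) (Dfair S (rs ! t) v)"
    unfolding jr_def by (rule job_range[OF S r v h])
qed

lemma rv_cap_le:
  assumes ok: "vm_ok S rs ivl b"
  shows "rv_cap S rs b \<le> s_mubar S"
proof -
  have ne: "rv_jobs b \<noteq> []" using ok unfolding vm_ok_def by simp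
  have fin: "finite ((\<lambda>t. Dfair S (rs ! t) (rv_vnf b)) ` set (rv_jobs b))" by simp
  have nee: "(\<lambda>t. Dfair S (rs ! t) (rv_vnf b)) ` set (rv_jobs b) \<noteq> {}" using ne by simp
  obtain t where t: "t \<in> set (rv_jobs b)" and m: "Min ((\<lambda>t. Dfair S (rs ! t) (rv_vnf b)) ` set (rv_jobs b)) = Dfair S (rs ! t) (rv_vnf b)"
    using Min_in[OF fin nee] by auto
  have "s_theta S (rv_vnf b) * rv_Lam rs b + 1 / Dfair S (rs!t) (rv_vnf b) \<le> s_mubar S"
    using ok t unfolding vm_ok_def by auto
  then show ?thesis unfolding rv_cap_def m .
qed

lemma res_interval:
  assumes S: "wf_sys S" and R: "\<forall>r\<in>set rs. wf_req S r" and inv: "rinv S rs st"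
    and h1: "1 \<le> h" and hk: "h \<le> length (st_Y st)"
  shows "phiRES S rs st h \<le> (2 + 3 * eps S h) * st_Y st ! (h-1)"
proof -
  define e where "e = eps S h"
  define ivl where "ivl = st_ivl st"
  define I where "I = sigma_set ivl h"
  define vms where "vms = st_vms st"
  define Y where "Y = st_Y st ! (h-1)"
  have ep: "0 < e" unfolding e_def by (rule eps_pos[OF S])
  have l: "0 < s_lmin S" using S by (simp add: wf_sys_def)
  have mu: "0 < s_mubar S" using S by (simp add: wf_sys_def)
  have Yd: "Y = phiSHA S rs e I" and CY: "Cq S h \<le> Y"
    using inv h1 hk unfolding rinv_def Y_def e_def I_def ivl_def by auto
  interpret sc: shactx S rs e I unfolding e_def I_def ivl_def by (rule shactx_interval[OF S R inv h1])
  have Y0: "0 \<le> Y" unfolding Yd by (rule sc.phiSHA_nonneg)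
  define G where "G = (\<Sum>i\<in>s_nodes S. \<Sum>v\<in>s_vnfs S. \<Sum>j\<in>Jset S e. kap S (s_layer S i))"
  define W where "W = (\<Sum>t\<in>I. \<Sum>v\<in>r_V (rs!t). kap S (lstar S (rs!t)) * s_theta S v * r_lam (rs!t) / cc S e (jr S rs e t v))"
  have WY: "W \<le> Y + G" unfolding W_def G_def Yd by (rule sc.phiSHA_bound)
  define A where "A j = s_lmin S * (1+e)^j" for j
  have Ap: "\<And>j. 0 < A j" unfolding A_def using l ep by simp
  have ccA: "cc S e j = (1+e) * A j" for j unfolding cc_def A_def by simp
  define w where "w t v = kap S (lstar S (rs!t)) * s_theta S v / A (jr S rs e t v) * r_lam (rs!t)" for t v
  have jw: "jsum rs vms w h = (1+e) * W"
  proof -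
    have "jsum rs vms w h = (\<Sum>t\<in>I. \<Sum>v\<in>r_V (rs!t). w t v)"
      using inv unfolding rinv_def vms_def I_def ivl_def by simp
    also have "\<dots> = (1+e) * W" unfolding W_def sum_distrib_left
    proof (intro sum.cong refl)
      fix t v
      have ne: "A (jr S rs e t v) \<noteq> 0" using Ap[of "jr S rs e t v"] by simp
      have ne2: "1 + e \<noteq> 0" using ep by simp
      show "w t v = (1 + e) * (kap S (lstar S (rs ! t)) * s_theta S v * r_lam (rs ! t) / cc S e (jr S rs e t v))"
      proof -
        define z where "z = kap S (lstar S (rs ! t)) * s_theta S v * r_lam (rs ! t)"
        define a where "a = A (jr S rs e t v)"
        have "(1 + e) * (z / ((1 + e) * a)) = ((1 + e) * z) / ((1 + e) * a)" by simp
        also have "\<dots> = z / a" using ne2 by (rule mult_divide_mult_cancel_left)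
        also have "z / a = w t v" unfolding z_def a_def w_def by simp
        finally show ?thesis unfolding ccA z_def a_def by simp
      qed
    qed
    finally show ?thesis .
  qed
  define n where "n = length vms"
  define B where "B a = vms ! a" for a
  have Bin: "\<And>a. a < n \<Longrightarrow> B a \<in> set vms" unfolding B_def n_def by simp
  have okB: "\<And>a. a < n \<Longrightarrow> vm_ok S rs ivl (B a)"
    using inv Bin unfolding rinv_def vms_def ivl_def by blast
  define kb where "kb a = kap S (s_layer S (rv_node (B a)))" for a
  define js where "js a = (\<Sum>t\<leftarrow>rv_jobs (B a). w t (rv_vnf (B a)))" for a
  have kbp: "0 < kb a" if a: "a < n" for a
  proof -
    have "rv_node (B a) \<in> s_nodes S" using okB[OF a] unfolding vm_ok_def by simp
    then show ?thesis unfolding kb_def using cost_pos[OF S layer_le_Lmax[OF S]] by blast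
  qed
  have per: "(if rv_int (B a) = h then rv_cost S rs (B a) else 0)
      \<le> (if rv_int (B a) = h \<and> small S rs (B a) then kb a else 0) + 2 * (if rv_int (B a) = h then js a else 0)"
    if a: "a < n" for a
  proof (cases "rv_int (B a) = h")
    case False then show ?thesis by simp
  next
    case True
    have ok: "vm_ok S rs ivl (B a)" using okB[OF a] .
    have nd: "rv_node (B a) \<in> s_nodes S" using ok unfolding vm_ok_def by simp
    have kf: "0 < s_kf S (s_layer S (rv_node (B a)))" and kp: "0 < s_kp S (s_layer S (rv_node (B a)))"
      using cost_pos[OF S layer_le_Lmax[OF S nd]] by auto
    have "rv_cost S rs (B a) \<le> kb a"
      unfolding rv_cost_def kb_def kap_def using rv_cap_le[OF ok] kp by (simp add: mult_left_mono)
    moreover have jse: "js a = kb a * s_theta S (rv_vnf (B a)) / A (rv_rng (B a)) * rv_Lam rs (B a)"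
    proof -
      have "js a = (\<Sum>t\<leftarrow>rv_jobs (B a). kb a * s_theta S (rv_vnf (B a)) / A (rv_rng (B a)) * r_lam (rs!t))"
        unfolding js_def
      proof (rule arg_cong[where f = sum_list], rule map_cong[OF refl])
        fix t assume t: "t \<in> set (rv_jobs (B a))"
        have "s_layer S (rv_node (B a)) = lstar S (rs!t)" "rv_rng (B a) = jr S rs (eps S (rv_int (B a))) t (rv_vnf (B a))"
          using ok t unfolding vm_ok_def by auto
        then show "w t (rv_vnf (B a)) = kb a * s_theta S (rv_vnf (B a)) / A (rv_rng (B a)) * r_lam (rs!t)"
          unfolding w_def kb_def using True e_def by simp
      qed
      also have "\<dots> = kb a * s_theta S (rv_vnf (B a)) / A (rv_rng (B a)) * rv_Lam rs (B a)"
        unfolding rv_Lam_def by (rule sum_list_const_mult)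
      finally show ?thesis .
    qed
    have th0: "0 \<le> s_theta S (rv_vnf (B a))"
    proof -
      obtain t where t: "t \<in> set (rv_jobs (B a))" using hd_in_set[of "rv_jobs (B a)"] ok unfolding vm_ok_def by blast
      have "t < length rs" "rv_vnf (B a) \<in> r_V (rs!t)" using ok t unfolding vm_ok_def by auto
      then show ?thesis using vnfs_theta[OF S req_vnf] R by (meson less_imp_le nth_mem)
    qed
    have L0: "0 \<le> rv_Lam rs (B a)" using rv_Lam_nonneg[OF S R] ok unfolding vm_ok_def by blast
    have js0: "0 \<le> js a" unfolding jse using kbp[OF a] th0 L0 Ap[of "rv_rng (B a)"]
      by (intro mult_nonneg_nonneg divide_nonneg_pos) auto
    have "kb a \<le> (if small S rs (B a) then kb a else 0) + 2 * js a"
    proof (cases "small S rs (B a)")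
      case True then show ?thesis using js0 by simp
    next
      case False
      then have "A (rv_rng (B a)) < 2 * s_theta S (rv_vnf (B a)) * rv_Lam rs (B a)"
        unfolding small_def A_def e_def using True by simp
      then have "1 < 2 * s_theta S (rv_vnf (B a)) * rv_Lam rs (B a) / A (rv_rng (B a))"
        using Ap by simp
      then have "kb a * 1 \<le> kb a * (2 * s_theta S (rv_vnf (B a)) * rv_Lam rs (B a) / A (rv_rng (B a)))"
        using kbp[OF a] by (intro mult_left_mono) auto
      also have "\<dots> = 2 * js a" unfolding jse by simp
      finally show ?thesis using False by simp
    qed
    ultimately show ?thesis using True by simp
  qed
  have phi_idx: "phiRES S rs st h = (\<Sum>a<n. if rv_int (B a) = h then rv_cost S rs (B a) else 0)"
    unfolding phiRES_def sum_list_map_nth n_def B_def vms_def ..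
  have js_idx: "jsum rs vms w h = (\<Sum>a<n. if rv_int (B a) = h then js a else 0)"
    unfolding jsum_def sum_list_map_nth n_def B_def js_def ..
  define Sm where "Sm = {a \<in> {..<n}. rv_int (B a) = h \<and> small S rs (B a)}"
  have sm_idx: "(\<Sum>a<n. if rv_int (B a) = h \<and> small S rs (B a) then kb a else 0) = (\<Sum>a\<in>Sm. kb a)"
    unfolding Sm_def by (rule sum.inter_filter[symmetric]) simp
  have "phiRES S rs st h \<le> (\<Sum>a<n. (if rv_int (B a) = h \<and> small S rs (B a) then kb a else 0) + 2 * (if rv_int (B a) = h then js a else 0))"
    unfolding phi_idx using per by (intro sum_mono) auto
  also have "\<dots> = (\<Sum>a\<in>Sm. kb a) + 2 * jsum rs vms w h"
    unfolding js_idx sm_idx[symmetric] by (simp add: sum.distrib sum_distrib_left)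
  finally have P1: "phiRES S rs st h \<le> (\<Sum>a\<in>Sm. kb a) + 2 * ((1+e) * W)" unfolding jw .
  define lab where "lab a = (rv_node (B a), rv_vnf (B a), rv_rng (B a))" for a
  define T where "T = s_nodes S \<times> (s_vnfs S \<times> Jset S e)"
  have u: "uniq S rs vms" using inv unfolding rinv_def vms_def by simp
  have inj: "inj_on lab Sm"
  proof (rule inj_onI)
    fix a c assume a: "a \<in> Sm" and c: "c \<in> Sm" and lc: "lab a = lab c"
    show "a = c"
    proof (rule ccontr)
      assume ne: "a \<noteq> c"
      have an: "a < length vms" "c < length vms" using a c unfolding Sm_def n_def by auto
      have "rlab (vms!a) = rlab (vms!c)" using a c lc unfolding Sm_def lab_def rlab_def B_def by auto
      moreover have "small S rs (vms!a)" "small S rs (vms!c)" using a c unfolding Sm_def B_def by auto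
      ultimately show False using u[unfolded uniq_def, rule_format, OF an ne] by blast
    qed
  qed
  have sub: "lab ` Sm \<subseteq> T"
  proof
    fix x assume "x \<in> lab ` Sm"
    then obtain a where a: "a \<in> Sm" and x: "x = lab a" by blast
    have an: "a < n" and ih: "rv_int (B a) = h" using a unfolding Sm_def by auto
    have ok: "vm_ok S rs ivl (B a)" using okB[OF an] .
    obtain t where t: "t \<in> set (rv_jobs (B a))" using hd_in_set[of "rv_jobs (B a)"] ok unfolding vm_ok_def by blast
    have tl: "t < length rs" and v: "rv_vnf (B a) \<in> r_V (rs!t)" using ok t unfolding vm_ok_def by auto
    have "wf_req S (rs!t)" using R tl by simp
    then have "rv_vnf (B a) \<in> s_vnfs S" by (rule req_vnf) (rule v)
    moreover have "rv_node (B a) \<in> s_nodes S" using ok unfolding vm_ok_def by simp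
    moreover have "rv_rng (B a) \<in> Jset S e"
    proof -
      have "in_range S e (rv_rng (B a)) (Dfair S (rs!t) (rv_vnf (B a)))" "0 < Dfair S (rs!t) (rv_vnf (B a))"
        using vm_job_range[OF S R ok t] ih e_def by auto
      then have "0 < s_mubar S - s_lmin S * (1 + e) ^ (rv_rng (B a) + 1)"
        using inr_facts(1)[OF _ _ l ep] by blast
      then show ?thesis unfolding Jset_def cc_def by simp
    qed
    ultimately show "x \<in> T" unfolding x lab_def T_def by simp
  qed
  have finT: "finite T" unfolding T_def using S Jset_finite[OF S ep] by (simp add: wf_sys_def)
  have "(\<Sum>a\<in>Sm. kb a) = (\<Sum>x\<in>lab ` Sm. kap S (s_layer S (fst x)))"
    using sum.reindex[OF inj, of "\<lambda>x. kap S (s_layer S (fst x))"] by (simp add: kb_def lab_def)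
  also have "\<dots> \<le> (\<Sum>x\<in>T. kap S (s_layer S (fst x)))"
  proof (rule sum_mono2[OF finT sub])
    fix x assume "x \<in> T - lab ` Sm"
    then have "fst x \<in> s_nodes S" unfolding T_def by auto
    then show "0 \<le> kap S (s_layer S (fst x))"
      using cost_pos[OF S layer_le_Lmax[OF S]] by (simp add: less_imp_le)
  qed
  also have "\<dots> = G" unfolding T_def G_def by (rule triple_sum[symmetric])
  finally have SmG: "(\<Sum>a\<in>Sm. kb a) \<le> G" .
  define K where "K = (\<Sum>i\<in>s_nodes S. kap S (s_layer S i))"
  have K0: "0 \<le> K" unfolding K_def
    by (rule sum_nonneg) (use cost_pos[OF S layer_le_Lmax[OF S]] in \<open>simp add: less_imp_le\<close>)
  have GK: "G = real (card (s_vnfs S)) * real (card (Jset S e)) * K"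
    unfolding G_def K_def by (simp add: sum_distrib_left mult.assoc)
  have addl: "(3 + 2 * e) * G \<le> e * Y"
  proof (cases "Jset S e = {}")
    case True
    then have "G = 0" unfolding GK by simp
    then show ?thesis using ep Y0 by simp
  next
    case False
    define X where "X = ln (s_mubar S / s_lmin S) / ln (1+e)"
    have cJ: "real (card (Jset S e)) \<le> X" unfolding X_def using Jset_card[OF S ep False] .
    have "1 \<le> card (Jset S e)" using False Jset_finite[OF S ep] by (simp add: Suc_le_eq card_gt_0_iff)
    then have X0: "0 \<le> X" using cJ by linarith
    have lnp: "0 < ln (1+e)" using ep by simp
    define nn where "nn = real (card (s_nodes S))"
    have nn1: "1 \<le> nn"
    proof -
      have "s_nodes S \<noteq> {}" "finite (s_nodes S)" using S by (auto simp: wf_sys_def)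
      then show ?thesis unfolding nn_def by (simp add: Suc_le_eq card_gt_0_iff)
    qed
    have ees: "e \<le> s_epsstar S" unfolding e_def using eps_le[OF S h1] .
    have coef: "3 + 2 * e \<le> (2 * nn + 2) * (1 + s_epsstar S) + 1"
    proof -
      have "(4::real) * (1 + s_epsstar S) \<le> (2 * nn + 2) * (1 + s_epsstar S)"
        using nn1 ep ees by (intro mult_right_mono) auto
      moreover obtain Q where Q: "Q = (2 * nn + 2) * (1 + s_epsstar S)" by simp
      ultimately have "4 + 4 * s_epsstar S \<le> Q" by (simp add: algebra_simps)
      then have "3 + 2 * e \<le> Q + 1" using ees ep by linarith
      then show ?thesis using Q by simp
    qed
    define V where "V = real (card (s_vnfs S))"
    have VXK: "0 \<le> V * X * K" unfolding V_def using X0 K0 by simp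
    have "(3 + 2 * e) * G \<le> (3 + 2 * e) * (V * X * K)"
    proof -
      have "G \<le> V * X * K" unfolding GK V_def[symmetric]
        using cJ K0 by (intro mult_right_mono mult_left_mono) (auto simp: V_def)
      then show ?thesis using ep by (intro mult_left_mono) auto
    qed
    also have "\<dots> \<le> ((2 * nn + 2) * (1 + s_epsstar S) + 1) * (V * X * K)"
      using coef VXK by (rule mult_right_mono)
    also have "\<dots> = e * Cq S h"
      unfolding Cq_def Zc_def X_def V_def K_def nn_def e_def[symmetric] using ep lnp
      by (simp add: field_simps)
    also have "\<dots> \<le> e * Y" using CY ep by simp
    finally show ?thesis .
  qed
  have "phiRES S rs st h \<le> G + 2 * ((1+e) * (Y + G))"
    using P1 SmG WY ep by (smt (verit) mult_left_mono)
  also have "\<dots> = 2 * (1+e) * Y + (3 + 2 * e) * G" by (simp add: algebra_simps)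
  also have "\<dots> \<le> 2 * (1+e) * Y + e * Y" using addl by simp
  also have "\<dots> = (2 + 3 * eps S h) * st_Y st ! (h-1)" unfolding Y_def e_def by (simp add: algebra_simps)
  finally show ?thesis .
qed

theorem lemma5:
  fixes S :: "('n, 'v) sys" and rs :: "'v req list" and st :: "('n, 'v) rstate" and k :: nat
  assumes "wf_sys S"
    and "\<forall>r\<in>set rs. wf_req S r"
    and "reach S rs st"
    and "1 \<le> k" and "k \<le> length (st_Y st)"
  shows "(\<Sum>h = 1..k. phiRES S rs st h)
           \<le> (2 + 4 * eps S k) * (\<Sum>h = 1..k. phiSHA S rs (eps S h) (sigma_set (st_ivl st) h))"
proof -
  note S = assms(1) and R = assms(2) and k1 = assms(4) and kl = assms(5)
  have inv: "rinv S rs st" using rinv_reach[OF S R assms(3)] .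
  define Y where "Y h = st_Y st ! (h-1)" for h
  have Yeq: "phiSHA S rs (eps S h) (sigma_set (st_ivl st) h) = Y h" if h: "h \<in> {1..k}" for h
    using inv h kl unfolding rinv_def Y_def by auto
  have Y0: "0 \<le> Y h" if h: "h \<in> {1..k}" for h
  proof -
    interpret sc: shactx S rs "eps S h" "sigma_set (st_ivl st) h"
      using shactx_interval[OF S R inv] h by simp
    show ?thesis using sc.phiSHA_nonneg Yeq[OF h] by simp
  qed
  have bnd: "phiRES S rs st h \<le> (2 + 3 * eps S h) * Y h" if h: "h \<in> {1..k}" for h
    using res_interval[OF S R inv] h kl unfolding Y_def by simp
  have "\<forall>h. 1 \<le> h \<and> h \<le> length (st_Y st) \<longrightarrow> Sq S (st_Y st) h \<le> st_Y st ! (h-1)"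
    using inv unfolding rinv_def by blast
  then have Sk: "Sq S (st_Y st) k \<le> Y k" using k1 kl unfolding Y_def by blast
  have ek: "0 < eps S k" by (rule eps_pos[OF S])
  have prev: "(\<Sum>p = 1..k - 1. (2 + 3 * eps S p) * Y p) \<le> eps S k * Y k"
  proof -
    have "1 / eps S k * (\<Sum>p = 1..k - 1. (2 + 3 * eps S p) * Y p) \<le> Y k"
      using Sk unfolding Sq_def Y_def .
    then show ?thesis using ek by (simp add: divide_simps mult.commute)
  qed
  obtain m where km: "k = Suc m" using k1 by (cases k) auto
  have split: "{1..k} = insert k {1..m}" unfolding km by auto
  have "(\<Sum>h = 1..k. phiRES S rs st h) \<le> (\<Sum>h = 1..k. (2 + 3 * eps S h) * Y h)"
    using bnd by (rule sum_mono)
  also have "\<dots> = (2 + 3 * eps S k) * Y k + (\<Sum>h = 1..m. (2 + 3 * eps S h) * Y h)"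
    unfolding split by (simp add: km)
  also have "(\<Sum>h = 1..m. (2 + 3 * eps S h) * Y h) \<le> eps S k * Y k" using prev km by simp
  also have "(2 + 3 * eps S k) * Y k + eps S k * Y k = (2 + 4 * eps S k) * Y k" by (simp add: algebra_simps)
  also have "\<dots> \<le> (2 + 4 * eps S k) * (\<Sum>h = 1..k. Y h)"
  proof (rule mult_left_mono)
    show "Y k \<le> (\<Sum>h = 1..k. Y h)" by (rule member_le_sum) (use k1 Y0 in auto)
    show "0 \<le> 2 + 4 * eps S k" using ek by simp
  qed
  also have "(\<Sum>h = 1..k. Y h) = (\<Sum>h = 1..k. phiSHA S rs (eps S h) (sigma_set (st_ivl st) h))"
    using Yeq by (intro sum.cong refl) auto
  finally show ?thesis by simp
qed

end
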